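(* Let $\hat h\in\operatorname{argmin}_{h\in\mathcal{H}_{2k+1}}\widehat{\mathbb{E}}_S[h]$ and $\bar h\in\operatorname{argmin}_{h\in\mathcal{H}_{2k+1}}\mathbb{E}_\mathcal{D}[h]$, assuming both minimizers exist. Fix $\delta,\epsilon\in(0,1)$. If $$n\ge \frac{3(k+1)(\log(pq)+8)+3\log\big(8k\,(k!)\big)+6\log(2/\delta)}{2\epsilon^2},$$ then with probability at least $1-\delta$ over the choice of $S$, $\mathbb{E}_\mathcal{D}[\hat h]-\mathbb{E}_\mathcal{D}[\bar h]\le\epsilon$.
   Context: Fix integers $p,q\ge1$, $k\ge1$, and basis functions $\phi_1,\dots,\phi_q:\mathbb{R}\to[-1,1]$. A labeled binary tree is a rooted, ordered, full binary tree (every internal node has exactly two children) such that: - each internal node is labeled "+" or "*"; - each leaf is labeled by a pair $(i,j)\in\{1,\dots,q\}\times\{1,\dots,p\}$, standing for $\phi_i(x_j)$. $\mathcal{F}_{2k+1}$ is the set of such trees with at most $2k+1$ nodes. For a tree $f$ and real leaf weights $\bm{w}$, the function $h(\bm{x};f,\bm{w})$ is defined recursively: a leaf gives $w\,\phi_i(x_j)$; "+" adds the values of its children; "*" multiplies them. Set $\mathcal{W}(f)=\{\bm{x}\mapsto h(\bm{x};f,\bm{w}):\|\bm{w}\|_1\le1\}$. Let $\mathcal{Y}\subseteq\mathbb{R}$ and let $d:\mathcal{Y}\times\mathbb{R}\to[0,1]$ be a loss with $d(y,\cdot)$ 1-Lipschitz for each $y$. Define $\mathcal{H}(f)=\{(\bm{x},y)\mapsto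 d(y,g(\bm{x})):g\in\mathcal{W}(f)\}$ and $\mathcal{H}_{2k+1}=\bigcup_{f\in\mathcal{F}_{2k+1}}\mathcal{H}(f)$. $\mathcal{D}$ is a distribution on $\mathbb{R}^p\times\mathcal{Y}$, and $S=\{z_1,\dots,z_n\}$ consists of $n$ i.i.d. samples from $\mathcal{D}$. The risks are $\mathbb{E}_\mathcal{D}[h]=\mathbb{E}_{z\sim\mathcal{D}}[h(z)]$ and $\widehat{\mathbb{E}}_S[h]=\frac1n\sum_{i=1}^n h(z_i)$. *)

theory Defs
  imports "HOL-Probability.Probability"
begin

text \<open>Labeled binary trees. A leaf \<open>Leaf i j\<close> stands for phi_i(x_j); the feature
  index j ranges over the finite index type 'p (so p = CARD('p)), the basis index i
  must lie in {1..q}.\<close>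
datatype 'p ltree = Leaf nat 'p | Plus "'p ltree" "'p ltree" | Times "'p ltree" "'p ltree"

fun nodes :: "'p ltree \<Rightarrow> nat" where
  "nodes (Leaf i j) = 1"
| "nodes (Plus l r) = 1 + nodes l + nodes r"
| "nodes (Times l r) = 1 + nodes l + nodes r"

fun leaves :: "'p ltree \<Rightarrow> nat" where
  "leaves (Leaf i j) = 1"
| "leaves (Plus l r) = leaves l + leaves r"
| "leaves (Times l r) = leaves l + leaves r"

fun valid_tree :: "nat \<Rightarrow> 'p ltree \<Rightarrow> bool" where
  "valid_tree q (Leaf i j) = (1 \<le> i \<and> i \<le> q)"
| "valid_tree q (Plus l r) = (valid_tree q l \<and> valid_tree q r)"
| "valid_tree q (Times l r) = (valid_tree q l \<and> valid_tree q r)"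

text \<open>Evaluation h(x; f, w); the leaf weights are given as a list in left-to-right
  leaf order (length = number of leaves).\<close>
fun heval :: "(nat \<Rightarrow> real \<Rightarrow> real) \<Rightarrow> ('p::finite) ltree \<Rightarrow> real list \<Rightarrow> real ^ 'p \<Rightarrow> real" where
  "heval \<phi> (Leaf i j) w x = hd w * \<phi> i (x $ j)"
| "heval \<phi> (Plus l r) w x =
     heval \<phi> l (take (leaves l) w) x + heval \<phi> r (drop (leaves l) w) x"
| "heval \<phi> (Times l r) w x =
     heval \<phi> l (take (leaves l) w) x * heval \<phi> r (drop (leaves l) w) x"

definition trees :: "nat \<Rightarrow> nat \<Rightarrow> 'p ltree set" where
  "trees q m = {f. valid_tree q f \<and> nodes f \<le> m}"

definition Wclass :: "(nat \<Rightarrow> real \<Rightarrow> real) \<Rightarrow> ('p::finite) ltree \<Rightarrow> (real ^ 'p \<Rightarrow> real) set" where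
  "Wclass \<phi> f = {heval \<phi> f w | w. length w = leaves f \<and> sum_list (map abs w) \<le> 1}"

definition Hclass :: "(real \<Rightarrow> real \<Rightarrow> real) \<Rightarrow> (nat \<Rightarrow> real \<Rightarrow> real) \<Rightarrow> ('p::finite) ltree
    \<Rightarrow> ((real ^ 'p) \<times> real \<Rightarrow> real) set" where
  "Hclass d \<phi> f = {(\<lambda>(x, y). d y (g x)) | g. g \<in> Wclass \<phi> f}"

definition Hm :: "(real \<Rightarrow> real \<Rightarrow> real) \<Rightarrow> (nat \<Rightarrow> real \<Rightarrow> real) \<Rightarrow> nat \<Rightarrow> nat
    \<Rightarrow> ((real ^ ('p::finite)) \<times> real \<Rightarrow> real) set" where
  "Hm d \<phi> q m = (\<Union>f \<in> trees q m. Hclass d \<phi> f)"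

definition emp_risk :: "nat \<Rightarrow> (nat \<Rightarrow> 'z) \<Rightarrow> ('z \<Rightarrow> real) \<Rightarrow> real" where
  "emp_risk n S h = (\<Sum>i<n. h (S i)) / real n"

end

theory Submission
  imports Defs
begin


lemma coords_indep:
  assumes D: "prob_space D" and I: "I \<noteq> {}"
  shows "prob_space.indep_vars (PiM I (\<lambda>_. D)) (\<lambda>_. D) (\<lambda>i x. x i) I"
proof -
  interpret product_prob_space "\<lambda>_. D" I
    by (intro product_prob_spaceI D)
  have "distr (PiM I (\<lambda>_. D)) (PiM I (\<lambda>_. D)) (\<lambda>x. restrict x I) = distr (PiM I (\<lambda>_. D)) (PiM I (\<lambda>_. D)) (\<lambda>x. x)"
    by (intro distr_cong) (auto simp: space_PiM PiE_def extensional_restrict)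
  also have "\<dots> = PiM I (\<lambda>_. D)" by simp
  also have "\<dots> = PiM I (\<lambda>i. distr (PiM I (\<lambda>_. D)) D (\<lambda>x. x i))"
    by (intro PiM_cong refl) (rule distr_PiM_component[symmetric], auto simp: D)
  finally show ?thesis
    by (subst P.indep_vars_iff_distr_eq_PiM'[OF I]) auto
qed

lemma hoeff_prod:
  fixes Z :: "'a \<Rightarrow> real"
  assumes D: "prob_space D" and n: "n > 0" and Zm: "Z \<in> borel_measurable D"
    and ab: "AE z in D. Z z \<in> {a..b}" and "a < b" and s: "s \<ge> 0"
  shows "measure (PiM {..<n} (\<lambda>_. D)) {S \<in> space (PiM {..<n} (\<lambda>_. D)).
            (\<Sum>i<n. Z (S i)) \<le> real n * integral\<^sup>L D Z - real n * s}
           \<le> exp (-2 * real n * s\<^sup>2 / (b - a)\<^sup>2)"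
    and "measure (PiM {..<n} (\<lambda>_. D)) {S \<in> space (PiM {..<n} (\<lambda>_. D)).
            (\<Sum>i<n. Z (S i)) \<ge> real n * integral\<^sup>L D Z + real n * s}
           \<le> exp (-2 * real n * s\<^sup>2 / (b - a)\<^sup>2)"
proof -
  let ?P = "PiM {..<n} (\<lambda>_. D)"
  interpret product_prob_space "\<lambda>_. D" "{..<n}"
    by (intro product_prob_spaceI D)
  have I: "{..<n} \<noteq> {}" using n by auto
  have ind: "P.indep_vars (\<lambda>_. borel) (\<lambda>i S. Z (S i)) {..<n}"
    by (rule P.indep_vars_compose2[OF coords_indep[OF D I]]) (use Zm in auto)
  have ex: "P.expectation (\<lambda>S. Z (S i)) = integral\<^sup>L D Z" if "i < n" for i
  proof -
    have "integral\<^sup>L (distr ?P D (\<lambda>S. S i)) Z = P.expectation (\<lambda>S. Z (S i))"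
      by (rule integral_distr) (use Zm that in auto)
    then show ?thesis using distr_PiM_component[of "{..<n}" "\<lambda>_. D" i] D that by simp
  qed
  interpret H: Hoeffding_ineq ?P "{..<n}" "\<lambda>i S. Z (S i)" "\<lambda>_. a" "\<lambda>_. b" "real n * integral\<^sup>L D Z"
  proof (unfold_locales)
    show "AE x in ?P. Z (x i) \<in> {a..b}" if "i \<in> {..<n}" for i
      by (rule AE_PiM_component[where P="\<lambda>z. Z z \<in> {a..b}"]) (use D that ab in auto)
    show "real n * integral\<^sup>L D Z \<equiv> \<Sum>i<n. P.expectation (\<lambda>S. Z (S i))"
      using ex by simp
  qed (use ind in auto)
  have pos: "(\<Sum>i<n. (b - a)\<^sup>2) > 0" using n \<open>a < b\<close> by simp
  have ns: "real n * s \<ge> 0" using s by simp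
  have e: "-2 * (real n * s)\<^sup>2 / (\<Sum>i<n. (b - a)\<^sup>2) = -2 * real n * s\<^sup>2 / (b - a)\<^sup>2"
  proof -
    have "(\<Sum>i<n. (b - a)\<^sup>2) = real n * (b - a)\<^sup>2" by simp
    moreover have "(b - a)\<^sup>2 > 0" using \<open>a < b\<close> by simp
    ultimately show ?thesis using n by (simp add: power_mult_distrib power2_eq_square)
  qed
  show "measure ?P {S \<in> space ?P. (\<Sum>i<n. Z (S i)) \<le> real n * integral\<^sup>L D Z - real n * s}
           \<le> exp (-2 * real n * s\<^sup>2 / (b - a)\<^sup>2)"
    using H.Hoeffding_ineq_le[OF ns pos] e by simp
  show "measure ?P {S \<in> space ?P. (\<Sum>i<n. Z (S i)) \<ge> real n * integral\<^sup>L D Z + real n * s}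
           \<le> exp (-2 * real n * s\<^sup>2 / (b - a)\<^sup>2)"
    using H.Hoeffding_ineq_ge[OF ns pos] e by simp
qed



definition l1 :: "real list \<Rightarrow> real" where "l1 w = sum_list (map abs w)"
definition l1d :: "real list \<Rightarrow> real list \<Rightarrow> real" where
  "l1d w v = sum_list (map (\<lambda>(a,b). \<bar>a - b\<bar>) (zip w v))"

lemma l1_split: "l1 w = l1 (take k w) + l1 (drop k w)"
  unfolding l1_def by (metis append_take_drop_id map_append sum_list_append)

lemma l1d_split: "l1d w v = l1d (take k w) (take k v) + l1d (drop k w) (drop k v)"
  unfolding l1d_def by (metis append_take_drop_id map_append sum_list_append take_zip drop_zip)

lemma l1_nonneg: "l1 w \<ge> 0" unfolding l1_def by (induction w) auto

lemma l1d_nonneg: "l1d w v \<ge> 0" unfolding l1d_def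
  by (intro sum_list_nonneg) auto

lemma leaves_pos: "leaves f \<ge> 1" by (induction f) auto

lemma heval_bound:
  assumes phi: "\<And>i t. i \<in> {1..q} \<Longrightarrow> \<bar>\<phi> i t\<bar> \<le> 1"
  shows "valid_tree q f \<Longrightarrow> length w = leaves f \<Longrightarrow> l1 w \<le> 1 \<Longrightarrow> \<bar>heval \<phi> f w x\<bar> \<le> l1 w"
proof (induction f arbitrary: w)
  case (Leaf i j)
  then obtain c where w: "w = [c]" by (cases w) auto
  have "\<bar>\<phi> i (x $ j)\<bar> \<le> 1" using phi Leaf by auto
  then have "\<bar>c * \<phi> i (x $ j)\<bar> \<le> \<bar>c\<bar>" by (simp add: abs_mult mult_left_le)
  then show ?case using w by (simp add: l1_def)
next
  case (Plus l r)
  let ?a = "take (leaves l) w" and ?b = "drop (leaves l) w"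
  have s: "l1 w = l1 ?a + l1 ?b" by (rule l1_split)
  have "l1 ?a \<le> 1" "l1 ?b \<le> 1" using s Plus.prems l1_nonneg[of ?a] l1_nonneg[of ?b] by linarith+
  then have "\<bar>heval \<phi> l ?a x\<bar> \<le> l1 ?a" "\<bar>heval \<phi> r ?b x\<bar> \<le> l1 ?b"
    using Plus by auto
  then show ?case using s by simp
next
  case (Times l r)
  let ?a = "take (leaves l) w" and ?b = "drop (leaves l) w"
  have s: "l1 w = l1 ?a + l1 ?b" by (rule l1_split)
  have "l1 ?a \<le> 1" "l1 ?b \<le> 1" using s Times.prems l1_nonneg[of ?a] l1_nonneg[of ?b] by linarith+
  then have 1: "\<bar>heval \<phi> l ?a x\<bar> \<le> l1 ?a" and 2: "\<bar>heval \<phi> r ?b x\<bar> \<le> l1 ?b"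
    using Times by auto
  have "\<bar>heval \<phi> l ?a x * heval \<phi> r ?b x\<bar> \<le> l1 ?a * 1"
    unfolding abs_mult using 1 2 \<open>l1 ?b \<le> 1\<close> by (intro mult_mono) auto
  then show ?case using s l1_nonneg[of ?b] by simp
qed

lemma heval_lip:
  assumes phi: "\<And>i t. i \<in> {1..q} \<Longrightarrow> \<bar>\<phi> i t\<bar> \<le> 1"
  shows "valid_tree q f \<Longrightarrow> length w = leaves f \<Longrightarrow> length v = leaves f \<Longrightarrow> l1 w \<le> 1 \<Longrightarrow> l1 v \<le> 1 \<Longrightarrow>
     \<bar>heval \<phi> f w x - heval \<phi> f v x\<bar> \<le> l1d w v"
proof (induction f arbitrary: w v)
  case (Leaf i j)
  then obtain c where w: "w = [c]" by (cases w) auto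
  from Leaf obtain e where v: "v = [e]" by (cases v) auto
  have "\<bar>\<phi> i (x $ j)\<bar> \<le> 1" using phi Leaf by auto
  then have "\<bar>(c - e) * \<phi> i (x $ j)\<bar> \<le> \<bar>c - e\<bar>" by (simp add: abs_mult mult_left_le)
  then show ?case using w v by (simp add: l1d_def left_diff_distrib)
next
  case (Plus l r)
  let ?a = "take (leaves l) w" and ?b = "drop (leaves l) w"
  let ?c = "take (leaves l) v" and ?d = "drop (leaves l) v"
  have s: "l1 w = l1 ?a + l1 ?b" "l1 v = l1 ?c + l1 ?d" by (rule l1_split)+
  have "l1 ?a \<le> 1" "l1 ?b \<le> 1" "l1 ?c \<le> 1" "l1 ?d \<le> 1"
    using s Plus.prems l1_nonneg[of ?a] l1_nonneg[of ?b] l1_nonneg[of ?c] l1_nonneg[of ?d] by linarith+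
  then have "\<bar>heval \<phi> l ?a x - heval \<phi> l ?c x\<bar> \<le> l1d ?a ?c"
    "\<bar>heval \<phi> r ?b x - heval \<phi> r ?d x\<bar> \<le> l1d ?b ?d"
    using Plus by auto
  then show ?case using l1d_split[of w v "leaves l"] by simp
next
  case (Times l r)
  let ?a = "take (leaves l) w" and ?b = "drop (leaves l) w"
  let ?c = "take (leaves l) v" and ?d = "drop (leaves l) v"
  have s: "l1 w = l1 ?a + l1 ?b" "l1 v = l1 ?c + l1 ?d" by (rule l1_split)+
  have "l1 ?a \<le> 1" "l1 ?b \<le> 1" "l1 ?c \<le> 1" "l1 ?d \<le> 1"
    using s Times.prems l1_nonneg[of ?a] l1_nonneg[of ?b] l1_nonneg[of ?c] l1_nonneg[of ?d] by linarith+
  then have 1: "\<bar>heval \<phi> l ?a x - heval \<phi> l ?c x\<bar> \<le> l1d ?a ?c"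
    and 2: "\<bar>heval \<phi> r ?b x - heval \<phi> r ?d x\<bar> \<le> l1d ?b ?d"
    and 3: "\<bar>heval \<phi> l ?a x\<bar> \<le> 1" and 4: "\<bar>heval \<phi> r ?d x\<bar> \<le> 1"
    using Times heval_bound[where q=q and \<phi>=\<phi>, OF phi, of l ?a x] heval_bound[where q=q and \<phi>=\<phi>, OF phi, of r ?d x] by auto
  define A where "A = heval \<phi> l ?a x"
  define B where "B = heval \<phi> r ?b x"
  define C where "C = heval \<phi> l ?c x"
  define E where "E = heval \<phi> r ?d x"
  have "A * B - C * E = A * (B - E) + E * (A - C)" by (simp add: algebra_simps)
  then have "\<bar>A * B - C * E\<bar> \<le> \<bar>A\<bar> * \<bar>B - E\<bar> + \<bar>E\<bar> * \<bar>A - C\<bar>"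
    by (metis abs_mult abs_triangle_ineq)
  also have "\<dots> \<le> 1 * l1d ?b ?d + 1 * l1d ?a ?c"
    using 1 2 3 4 unfolding A_def B_def C_def E_def
    by (intro add_mono mult_mono) auto
  finally show ?case using l1d_split[of w v "leaves l"]
    unfolding A_def B_def C_def E_def by simp
qed



definition tr :: "real \<Rightarrow> int" where "tr y = (if y \<ge> 0 then \<lfloor>y\<rfloor> else \<lceil>y\<rceil>)"

lemma tr_abs: "\<bar>real_of_int (tr y)\<bar> \<le> \<bar>y\<bar>"
proof (cases "y \<ge> 0")
  case True
  then have "0 \<le> \<lfloor>y\<rfloor>" by simp
  then show ?thesis using True by (simp add: tr_def)
next
  case False
  then have "\<lceil>y\<rceil> \<le> 0" by (simp add: ceiling_le_iff)
  then show ?thesis using False by (simp add: tr_def)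
qed

lemma tr_err: "\<bar>y - real_of_int (tr y)\<bar> \<le> 1"
  unfolding tr_def by (auto simp: abs_if) linarith+

definition rnd :: "nat \<Rightarrow> real list \<Rightarrow> real list" where
  "rnd m w = map (\<lambda>x. real_of_int (tr (real m * x)) / real m) w"

definition zset :: "nat \<Rightarrow> nat \<Rightarrow> int list set" where
  "zset l m = {zs. length zs = l \<and> sum_list (map abs zs) \<le> int m}"

definition net :: "nat \<Rightarrow> nat \<Rightarrow> real list set" where
  "net m l = (\<lambda>zs. map (\<lambda>z. real_of_int z / real m) zs) ` zset l m"

lemma length_rnd[simp]: "length (rnd m w) = length w"
  by (simp add: rnd_def)

lemma l1_rnd: assumes "m > 0" shows "l1 (rnd m w) \<le> l1 w"
proof -
  have "\<bar>real_of_int (tr (real m * x)) / real m\<bar> \<le> \<bar>x\<bar>" for x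
    using tr_abs[of "real m * x"] assms by (simp add: abs_mult divide_le_eq mult.commute)
  then show ?thesis unfolding l1_def rnd_def
    by (induction w) (auto intro: add_mono)
qed

lemma l1d_rnd: assumes "m > 0" shows "l1d w (rnd m w) \<le> real (length w) / real m"
proof -
  have e: "\<bar>x - real_of_int (tr (real m * x)) / real m\<bar> \<le> 1 / real m" for x
  proof -
    have "\<bar>x - real_of_int (tr (real m * x)) / real m\<bar> = \<bar>real m * x - real_of_int (tr (real m * x))\<bar> / real m"
      using assms by (simp add: field_simps)
    also have "\<dots> \<le> 1 / real m" using tr_err[of "real m * x"] assms by (simp add: divide_right_mono)
    finally show ?thesis .
  qed
  show ?thesis unfolding l1d_def rnd_def
  proof (induction w)
    case (Cons x w)
    then show ?case using e[of x] by (simp add: add_divide_distrib)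
  qed simp
qed

lemma rnd_net: assumes "m > 0" "l1 w \<le> 1" shows "rnd m w \<in> net m (length w)"
proof -
  let ?zs = "map (\<lambda>x. tr (real m * x)) w"
  have "real_of_int (sum_list (map abs ?zs)) = sum_list (map (\<lambda>x. \<bar>real_of_int (tr (real m * x))\<bar>) w)"
    by (induction w) auto
  also have "\<dots> \<le> sum_list (map (\<lambda>x. real m * \<bar>x\<bar>) w)"
  proof (intro sum_list_mono)
    fix x show "\<bar>real_of_int (tr (real m * x))\<bar> \<le> real m * \<bar>x\<bar>"
      using tr_abs[of "real m * x"] by (simp add: abs_mult)
  qed
  also have "\<dots> = real m * l1 w" unfolding l1_def by (induction w) (auto simp: algebra_simps)
  also have "\<dots> \<le> real m" using assms by simp
  finally have "sum_list (map abs ?zs) \<le> int m" by linarith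
  then have "?zs \<in> zset (length w) m" by (simp add: zset_def)
  moreover have "rnd m w = map (\<lambda>z. real_of_int z / real m) ?zs" by (simp add: rnd_def)
  ultimately show ?thesis unfolding net_def by blast
qed

lemma net_props: assumes "m > 0" "v \<in> net m l" shows "length v = l" "l1 v \<le> 1"
proof -
  from assms obtain zs where zs: "zs \<in> zset l m" "v = map (\<lambda>z. real_of_int z / real m) zs"
    unfolding net_def by blast
  then show "length v = l" by (simp add: zset_def)
  have "l1 v = real_of_int (sum_list (map abs zs)) / real m"
    unfolding zs(2) l1_def by (induction zs) (auto simp: add_divide_distrib)
  also have "\<dots> \<le> real m / real m" using zs(1) assms(1)
    by (intro divide_right_mono) (auto simp: zset_def)
  also have "\<dots> = 1" using assms by simp
  finally show "l1 v \<le> 1" .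
qed

lemma zset_Suc: "zset (Suc l) m =
   (\<Union>i\<in>{0..m}. (\<lambda>zs. int i # zs) ` zset l (m - i)) \<union> (\<Union>i\<in>{1..m}. (\<lambda>zs. - int i # zs) ` zset l (m - i))"
proof (intro equalityI subsetI)
  fix zs assume "zs \<in> zset (Suc l) m"
  then obtain a ys where zs: "zs = a # ys" "length ys = l" "\<bar>a\<bar> + sum_list (map abs ys) \<le> int m"
    unfolding zset_def by (cases zs) auto
  have ys0: "sum_list (map abs ys) \<ge> 0" by (intro sum_list_nonneg) auto
  show "zs \<in> (\<Union>i\<in>{0..m}. (\<lambda>zs. int i # zs) ` zset l (m - i)) \<union> (\<Union>i\<in>{1..m}. (\<lambda>zs. - int i # zs) ` zset l (m - i))"
  proof (cases "a \<ge> 0")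
    case True
    then have "nat a \<in> {0..m}" "ys \<in> zset l (m - nat a)" "zs = int (nat a) # ys"
      using zs ys0 by (auto simp: zset_def)
    then show ?thesis by blast
  next
    case False
    then have "nat (-a) \<in> {1..m}" "ys \<in> zset l (m - nat (-a))" "zs = - int (nat (-a)) # ys"
      using zs ys0 by (auto simp: zset_def)
    then show ?thesis by blast
  qed
qed (auto simp: zset_def)

lemma finite_zset: "finite (zset l m)"
  by (induction l arbitrary: m) (auto simp: zset_Suc, simp add: zset_def)

lemma card_zset:
  fixes x :: real assumes x: "0 < x" "x < 1"
  shows "real (card (zset l m)) \<le> (1/x)^m * ((1+x)/(1-x))^l"
proof (induction l arbitrary: m)
  case 0
  have "zset 0 m = {[]}" by (auto simp: zset_def)
  moreover have "1 \<le> (1/x)^m" using x by (simp add: one_le_power)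
  ultimately show ?case by simp
next
  case (Suc l)
  let ?g = "((1+x)/(1-x))^l"
  have pw: "(1/x)^(m - i) = (1/x)^m * x^i" if "i \<le> m" for i
    using that x by (simp add: power_diff power_divide)
  have "real (card (zset (Suc l) m)) \<le>
        real (card (\<Union>i\<in>{0..m}. (\<lambda>zs. int i # zs) ` zset l (m - i))) +
        real (card (\<Union>i\<in>{1..m}. (\<lambda>zs. - int i # zs) ` zset l (m - i)))"
    unfolding zset_Suc by (simp add: card_Un_le flip: of_nat_add)
  also have "\<dots> \<le> (\<Sum>i\<in>{0..m}. real (card ((\<lambda>zs. int i # zs) ` zset l (m - i)))) +
                  (\<Sum>i\<in>{1..m}. real (card ((\<lambda>zs. - int i # zs) ` zset l (m - i))))"
    by (intro add_mono) (simp_all add: card_UN_le flip: of_nat_sum)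
  also have "\<dots> \<le> (\<Sum>i\<in>{0..m}. (1/x)^m * x^i * ?g) + (\<Sum>i\<in>{1..m}. (1/x)^m * x^i * ?g)"
  proof (intro add_mono sum_mono)
    fix i assume i: "i \<in> {0..m}"
    have "real (card ((\<lambda>zs. int i # zs) ` zset l (m - i))) \<le> real (card (zset l (m - i)))"
      by (simp add: card_image_le finite_zset)
    also have "\<dots> \<le> (1/x)^m * x^i * ?g" using Suc[of "m - i"] pw[of i] i by simp
    finally show "real (card ((\<lambda>zs. int i # zs) ` zset l (m - i))) \<le> (1/x)^m * x^i * ?g" .
  next
    fix i assume i: "i \<in> {1..m}"
    have "real (card ((\<lambda>zs. - int i # zs) ` zset l (m - i))) \<le> real (card (zset l (m - i)))"
      by (simp add: card_image_le finite_zset)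
    also have "\<dots> \<le> (1/x)^m * x^i * ?g" using Suc[of "m - i"] pw[of i] i by simp
    finally show "real (card ((\<lambda>zs. - int i # zs) ` zset l (m - i))) \<le> (1/x)^m * x^i * ?g" .
  qed
  also have "\<dots> = (1/x)^m * ?g * ((\<Sum>i\<in>{0..m}. x^i) + (\<Sum>i\<in>{1..m}. x^i))"
    by (simp add: sum_distrib_left sum_distrib_right algebra_simps)
  also have "(\<Sum>i\<in>{0..m}. x^i) + (\<Sum>i\<in>{1..m}. x^i) \<le> (1+x)/(1-x)"
  proof -
    have a: "(\<Sum>i\<in>{0..m}. x^i) = (1 - x^(Suc m)) / (1 - x)"
    proof -
      have "(\<Sum>i\<in>{0..m}. x^i) = (\<Sum>i<Suc m. x^i)" by (simp only: atLeast0AtMost lessThan_Suc_atMost)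
      also have "\<dots> = (1 - x^(Suc m)) / (1 - x)" using x by (simp only: sum_gp_strict) simp
      finally show ?thesis .
    qed
    have "(\<Sum>i\<in>{1..m}. x^i) = x * (\<Sum>i<m. x^i)"
      by (induction m) (auto simp: algebra_simps)
    also have "\<dots> = x * ((1 - x^m) / (1 - x))" using x by (simp add: sum_gp_strict)
    finally have b: "(\<Sum>i\<in>{1..m}. x^i) = x * (1 - x^m) / (1 - x)" by simp
    have "x * x^m \<ge> 0" using x by auto
    then show ?thesis unfolding a b using x
      by (simp add: divide_simps) (simp add: algebra_simps)
  qed
  then have "(1/x)^m * ?g * ((\<Sum>i\<in>{0..m}. x^i) + (\<Sum>i\<in>{1..m}. x^i)) \<le> (1/x)^m * ?g * ((1+x)/(1-x))"
    using x by (intro mult_left_mono) auto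
  finally show ?case by (simp add: mult_ac)
qed



lemma card_net:
  assumes m: "m > 0" and lL: "l \<le> L" and L: "L > 0"
  shows "finite (net m l)" "real (card (net m l)) \<le> exp (real L) * ((2 * real m + real L) / real L) ^ L"
proof -
  show "finite (net m l)" unfolding net_def by (simp add: finite_zset)
  define x where "x = real m / (real m + real L)"
  have x: "0 < x" "x < 1" using m L by (auto simp: x_def)
  have "real (card (net m l)) \<le> real (card (zset l m))"
    unfolding net_def by (simp add: card_image_le finite_zset)
  also have "\<dots> \<le> (1/x)^m * ((1+x)/(1-x))^l" by (rule card_zset[OF x])
  also have "(1/x) = 1 + real L / real m" using m L by (simp add: x_def field_simps)
  also have "(1+x)/(1-x) = (2 * real m + real L) / real L"
  proof -
    have a: "1 + x = (2 * real m + real L) / (real m + real L)" "1 - x = real L / (real m + real L)"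
      using m L by (simp_all add: x_def field_simps)
    have c: "real m + real L > 0" using m L by simp
    show ?thesis unfolding a using c L by (simp add: divide_simps)
  qed
  also have "(1 + real L / real m)^m \<le> exp (real L)"
    using exp_ge_one_plus_x_over_n_power_n[where x="real L" and n=m] m by simp
  then have "(1 + real L / real m)^m * ((2 * real m + real L) / real L)^l \<le> exp (real L) * ((2 * real m + real L) / real L)^l"
    by (intro mult_right_mono) auto
  also have "((2 * real m + real L) / real L)^l \<le> ((2 * real m + real L) / real L)^L"
    using L lL by (intro power_increasing) (auto simp: field_simps)
  finally show "real (card (net m l)) \<le> exp (real L) * ((2 * real m + real L) / real L) ^ L"
    by (simp add: mult_left_mono)
qed

definition mlev :: "nat \<Rightarrow> nat \<Rightarrow> nat" where "mlev L j = 24 * L * 2^j"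

lemma card_net_lev:
  assumes lL: "l \<le> L" and L: "L > 0"
  shows "finite (net (mlev L j) l)" "real (card (net (mlev L j) l)) \<le> exp (real L * (6 + real j))"
proof -
  have m: "mlev L j > 0" using L by (simp add: mlev_def)
  show "finite (net (mlev L j) l)" using card_net[OF m lL L] by simp
  have "(2 * real (mlev L j) + real L) / real L = 48 * 2^j + 1" using L by (simp add: mlev_def field_simps)
  also have "\<dots> \<le> 49 * 2^j" by simp
  also have "\<dots> \<le> exp 5 * exp (real j)"
  proof (intro mult_mono)
    have "(49::real) \<le> (1 + 5 / real (10::nat))^10" by (simp add: eval_nat_numeral)
    also have "\<dots> \<le> exp 5" by (rule exp_ge_one_plus_x_over_n_power_n) auto
    finally show "(49::real) \<le> exp 5" .
    have "(2::real)^j \<le> exp 1 ^ j" using exp_ge_add_one_self[of 1] by (intro power_mono) auto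
    then show "(2::real)^j \<le> exp (real j)" by (simp add: exp_of_nat_mult[symmetric])
  qed auto
  finally have b: "(2 * real (mlev L j) + real L) / real L \<le> exp (5 + real j)" by (simp add: exp_add)
  have "real (card (net (mlev L j) l)) \<le> exp (real L) * ((2 * real (mlev L j) + real L) / real L) ^ L"
    using card_net[OF m lL L] by simp
  also have "\<dots> \<le> exp (real L) * exp (5 + real j) ^ L"
    using b L by (intro mult_left_mono power_mono) (auto simp: mlev_def)
  also have "\<dots> = exp (real L * (6 + real j))"
    by (simp add: exp_of_nat_mult[symmetric] exp_add[symmetric] algebra_simps)
  finally show "real (card (net (mlev L j) l)) \<le> exp (real L * (6 + real j))" .
qed

definition TL :: "nat \<Rightarrow> nat \<Rightarrow> 'p ltree set" where
  "TL q l = {f. valid_tree q f \<and> leaves f = l}"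

lemma TL_1: "TL q 1 = (\<lambda>(i,j). Leaf i j) ` ({1..q} \<times> UNIV)"
proof (intro equalityI subsetI)
  fix f :: "'p ltree" assume "f \<in> TL q 1"
  then show "f \<in> (\<lambda>(i,j). Leaf i j) ` ({1..q} \<times> UNIV)"
  proof (cases f)
    case (Plus x y) then have False using \<open>f \<in> TL q 1\<close> leaves_pos[of x] leaves_pos[of y] by (simp add: TL_def)
    then show ?thesis ..
  next
    case (Times x y) then have False using \<open>f \<in> TL q 1\<close> leaves_pos[of x] leaves_pos[of y] by (simp add: TL_def)
    then show ?thesis ..
  qed (use \<open>f \<in> TL q 1\<close> in \<open>auto simp: TL_def image_iff\<close>)
qed (auto simp: TL_def)

lemma TL_ge2:
  assumes "l \<ge> 2"
  shows "TL q l = (\<Union>a\<in>{1..l-1}. (\<lambda>(x,y). Plus x y) ` (TL q a \<times> TL q (l - a)) \<union> (\<lambda>(x,y). Times x y) ` (TL q a \<times> TL q (l - a)))"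
proof (intro equalityI subsetI)
  fix f :: "'p ltree" assume f: "f \<in> TL q l"
  show "f \<in> (\<Union>a\<in>{1..l-1}. (\<lambda>(x,y). Plus x y) ` (TL q a \<times> TL q (l - a)) \<union> (\<lambda>(x,y). Times x y) ` (TL q a \<times> TL q (l - a)))"
  proof (cases f)
    case (Leaf i j) then show ?thesis using f assms by (simp add: TL_def)
  next
    case (Plus x y)
    then have "leaves x \<in> {1..l-1}" "x \<in> TL q (leaves x)" "y \<in> TL q (l - leaves x)"
      using f leaves_pos[of x] leaves_pos[of y] by (auto simp: TL_def)
    then show ?thesis using Plus by blast
  next
    case (Times x y)
    then have "leaves x \<in> {1..l-1}" "x \<in> TL q (leaves x)" "y \<in> TL q (l - leaves x)"
      using f leaves_pos[of x] leaves_pos[of y] by (auto simp: TL_def)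
    then show ?thesis using Times by blast
  qed
qed (use assms in \<open>auto simp: TL_def\<close>)

lemma fact_mult_le: "fact a * fact b \<le> (fact (a + b) :: nat)"
proof -
  have "fact a * fact (a + b - a) * ((a + b) choose a) = (fact (a + b) :: nat)"
    by (rule binomial_fact_lemma) simp
  moreover have "((a + b) choose a) > 0" by simp
  ultimately show ?thesis
  proof -
    have "fact a * fact b * 1 \<le> fact a * fact b * ((a + b) choose a)"
      using \<open>((a + b) choose a) > 0\<close> by (intro mult_le_mono2) (simp add: Suc_le_eq)
    with \<open>fact a * fact (a + b - a) * ((a + b) choose a) = (fact (a + b) :: nat)\<close> show ?thesis by simp
  qed
qed

lemma card_TL:
  fixes q :: nat
  shows "l \<ge> 1 \<Longrightarrow> finite (TL q l :: ('p::finite) ltree set) \<and>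
     real (card (TL q l :: 'p ltree set)) \<le> 2^(l-1) * fact (l-1) * (real CARD('p) * real q)^l"
proof (induction l rule: less_induct)
  case (less l)
  show ?case
  proof (cases "l = 1")
    case True
    have "card ((\<lambda>(i,j). Leaf i j) ` ({1..q} \<times> (UNIV :: 'p set))) \<le> card ({1..q} \<times> (UNIV :: 'p set))"
      by (rule card_image_le) simp
    then have "real (card (TL q 1 :: 'p ltree set)) \<le> real (q * CARD('p))"
      unfolding TL_1 by (simp add: card_cartesian_product del: of_nat_mult)
    moreover have e: "TL q l = (\<lambda>(i,j). Leaf i j) ` ({1..q} \<times> (UNIV :: 'p set))" using True TL_1 by simp
    ultimately show ?thesis using True by (simp add: mult.commute)
  next
    case False
    then have l2: "l \<ge> 2" using less.prems by simp
    define c where "c = real CARD('p) * real q"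
    have c0: "c \<ge> 0" by (simp add: c_def)
    let ?S = "\<lambda>a. (\<lambda>(x,y). Plus x y) ` (TL q a \<times> TL q (l - a)) \<union> (\<lambda>(x,y). Times x y) ` ((TL q a :: 'p ltree set) \<times> TL q (l - a))"
    have IH: "finite (TL q a :: 'p ltree set)" "real (card (TL q a :: 'p ltree set)) \<le> 2^(a-1) * fact (a-1) * c^a"
      if "1 \<le> a" "a < l" for a using less.IH[OF that(2) that(1)] by (auto simp: c_def)
    have fin: "finite (?S a)" if "a \<in> {1..l-1}" for a using IH that by auto
    have bnd: "real (card (?S a)) \<le> 2^(l-1) * fact (l-2) * c^l" if a: "a \<in> {1..l-1}" for a
    proof -
      have A: "real (card (TL q a :: 'p ltree set)) \<le> 2^(a-1) * fact (a-1) * c^a"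
        and B: "real (card (TL q (l-a) :: 'p ltree set)) \<le> 2^(l-a-1) * fact (l-a-1) * c^(l-a)"
        using IH[of a] IH[of "l - a"] a by auto
      have "real (card (?S a)) \<le> real (card ((TL q a :: 'p ltree set) \<times> (TL q (l - a) :: 'p ltree set))) + real (card ((TL q a :: 'p ltree set) \<times> (TL q (l - a) :: 'p ltree set)))"
      proof -
        have "card (?S a) \<le> card ((\<lambda>(x,y). Plus x y) ` ((TL q a :: 'p ltree set) \<times> (TL q (l - a) :: 'p ltree set))) + card ((\<lambda>(x,y). Times x y) ` ((TL q a :: 'p ltree set) \<times> (TL q (l - a) :: 'p ltree set)))"
          by (rule card_Un_le)
        also have "\<dots> \<le> card ((TL q a :: 'p ltree set) \<times> (TL q (l - a) :: 'p ltree set)) + card ((TL q a :: 'p ltree set) \<times> (TL q (l - a) :: 'p ltree set))"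
        proof -
          have "1 \<le> a" "a < l" "1 \<le> l - a" "l - a < l" using a l2 by auto
          then have fa: "finite ((TL q a :: 'p ltree set) \<times> (TL q (l - a) :: 'p ltree set))" using IH(1)[of a] IH(1)[of "l - a"] by auto
          show ?thesis by (intro add_mono card_image_le fa)
        qed
        finally show ?thesis by linarith
      qed
      also have "\<dots> = 2 * (real (card (TL q a :: 'p ltree set)) * real (card (TL q (l-a) :: 'p ltree set)))"
        by (simp add: card_cartesian_product)
      also have "\<dots> \<le> 2 * ((2^(a-1) * fact (a-1) * c^a) * (2^(l-a-1) * fact (l-a-1) * c^(l-a)))"
        using A B c0 by (intro mult_left_mono mult_mono) auto
      also have "\<dots> = 2^(l-1) * (fact (a-1) * fact (l-a-1)) * c^l"
      proof -
        have p2: "2 * (2::real)^(a-1) * 2^(l-a-1) = 2^(l-1)"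
        proof -
          have e: "l - 1 = Suc ((a-1) + (l-a-1))" using a by auto
          show ?thesis unfolding e by (simp add: power_add)
        qed
        have pc: "c^a * c^(l-a) = c^l"
        proof -
          have "a + (l - a) = l" using a by auto
          then show ?thesis by (metis power_add)
        qed
        have "2 * ((2^(a-1) * fact (a-1) * c^a) * (2^(l-a-1) * fact (l-a-1) * c^(l-a)))
              = (2 * (2::real)^(a-1) * 2^(l-a-1)) * (fact (a-1) * fact (l-a-1)) * (c^a * c^(l-a))"
          by (simp only: mult_ac)
        also have "\<dots> = 2^(l-1) * (fact (a-1) * fact (l-a-1)) * c^l" by (simp only: p2 pc)
        finally show ?thesis .
      qed
      also have "\<dots> \<le> 2^(l-1) * fact (l-2) * c^l"
      proof -
        have "fact (a-1) * fact (l-a-1) \<le> (fact (a - 1 + (l - a - 1)) :: nat)" by (rule fact_mult_le)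
        also have "a - 1 + (l - a - 1) = l - 2" using a by auto
        finally have "real (fact (a-1) * fact (l-a-1)) \<le> real (fact (l-2) :: nat)" by linarith
        then have "(fact (a-1) * fact (l-a-1) :: real) \<le> fact (l-2)" by simp
        then show ?thesis using c0 by (intro mult_right_mono mult_left_mono) auto
      qed
      finally show ?thesis .
    qed
    have eTL: "TL q l = (\<Union>a\<in>{1..l-1}. ?S a)" by (rule TL_ge2[OF l2])
    then have fTL: "finite (TL q l :: 'p ltree set)" using fin by simp
    have "card (TL q l :: 'p ltree set) \<le> (\<Sum>a\<in>{1..l-1}. card (?S a))"
      unfolding eTL by (rule card_UN_le) simp
    then have "real (card (TL q l :: 'p ltree set)) \<le> (\<Sum>a\<in>{1..l-1}. real (card (?S a)))"
      by (simp flip: of_nat_sum)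
    also have "\<dots> \<le> (\<Sum>a\<in>{1..l-1}. 2^(l-1) * fact (l-2) * c^l)" by (intro sum_mono bnd)
    also have "\<dots> = real (l - 1) * (2^(l-1) * fact (l-2) * c^l)" by simp
    also have "\<dots> = 2^(l-1) * (real (l-1) * fact (l-2)) * c^l" by (simp add: algebra_simps)
    also have "real (l-1) * fact (l-2) = (fact (l-1) :: real)"
    proof -
      obtain t where t: "l = Suc (Suc t)" using l2 by (metis add_2_eq_Suc le_Suc_ex)
      show ?thesis unfolding t by (simp add: fact_Suc)
    qed
    finally show ?thesis using fTL by (simp add: c_def)
  qed
qed



lemma amgm_sqrt:
  fixes a n \<epsilon> M \<theta> :: real
  assumes a: "a \<ge> 0" and th: "\<theta> > 0" and M: "M > 0" and e: "\<epsilon> > 0" and n: "n > 0"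
    and nM: "2 * n * \<epsilon>^2 \<ge> M"
  shows "sqrt (a / (2 * n)) \<le> \<epsilon> * (a / (M * \<theta>) + \<theta>) / 2"
proof -
  have "a / (2 * n) \<le> a * \<epsilon>^2 / M"
    using a M n nM by (simp add: divide_simps) (metis mult.commute mult_left_mono mult.left_commute)
  then have "sqrt (a / (2 * n)) \<le> sqrt (a * \<epsilon>^2 / M)" by (rule real_sqrt_le_mono)
  also have "\<dots> = \<epsilon> * sqrt ((a / (M * \<theta>)) * \<theta>)"
    using e th M by (simp add: real_sqrt_mult real_sqrt_divide)
  also have "sqrt ((a / (M * \<theta>)) * \<theta>) \<le> (a / (M * \<theta>) + \<theta>) / 2"
    using a th M by (intro arith_geo_mean_sqrt) auto
  finally show ?thesis using e by (simp add: mult_left_mono)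
qed

lemma sum_half: "(\<Sum>j\<in>{1..J}. (1::real) / 2^(j+1)) = 1/2 - 1 / 2^(J+1)"
  by (induction J) (auto simp: field_simps)

lemma sum_jhalf: "(\<Sum>j\<in>{1..J}. real j / 2^(j+1)) = 1 - (real J + 2) / 2^(J+1)"
  by (induction J) (auto simp: field_simps)

lemma sum_theta: "(\<Sum>j\<in>{1..J}. (1::real) / (8 * 2^j)) \<le> 1/8"
proof -
  have "(\<Sum>j\<in>{1..J}. (1::real) / (8 * 2^j)) = (1/4) * (\<Sum>j\<in>{1..J}. (1::real) / 2^(j+1))"
    by (simp add: sum_distrib_left)
  also have "\<dots> \<le> 1/8" unfolding sum_half by simp
  finally show ?thesis .
qed

lemma ln2_le1: "ln (2::real) \<le> 1"
proof -
  have "(2::real) \<le> exp 1" using exp_ge_add_one_self[of "1::real"] by simp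
  then have "ln (2::real) \<le> ln (exp 1)" by (intro ln_mono) auto
  then show ?thesis by simp
qed

definition B0v :: "real \<Rightarrow> nat \<Rightarrow> real \<Rightarrow> real" where
  "B0v K L \<Lambda> = K + 6 * real L + \<Lambda> + ln 2"
definition Bjv :: "real \<Rightarrow> nat \<Rightarrow> real \<Rightarrow> nat \<Rightarrow> real" where
  "Bjv K L \<Lambda> j = K + real L * (6 + real j) + real L * (5 + real j) + \<Lambda> + (real j + 1) * ln 2"

lemma final_arith:
  fixes n \<epsilon> \<Lambda> K lq lf lf' :: real and L J :: nat
  assumes n: "n > 0" and e: "\<epsilon> > 0" and Lam: "\<Lambda> \<ge> 0" and K0: "K \<ge> 0"
    and lq: "lq \<ge> 0" and lf: "lf \<ge> 0" "lf \<le> lf'"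
    and K: "K \<le> real L * lq + lf + 2 * real L"
    and nM: "2 * n * \<epsilon>^2 \<ge> 3 * real L * (lq + 8) + 3 * lf' + 6 * \<Lambda>"
    and L: "L \<ge> 2"
  shows "sqrt (B0v K L \<Lambda> / (2 * n)) + (\<Sum>j\<in>{1..J}. 2 * (1 / (8 * 2^j)) * sqrt (Bjv K L \<Lambda> j / (2 * n)))
           + sqrt (\<Lambda> / (2 * n)) \<le> 999/1000 * \<epsilon>"
proof -
  define M where "M = 3 * real L * (lq + 8) + 3 * lf' + 6 * \<Lambda>"
  have M: "M > 0" unfolding M_def using L lq lf Lam by (simp add: add_pos_nonneg)
  have nM': "2 * n * \<epsilon>^2 \<ge> M" using nM by (simp add: M_def)
  have l2: "0 \<le> ln (2::real)" "ln (2::real) \<le> 1" using ln2_le1 by auto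
  have B0: "B0v K L \<Lambda> \<ge> 0" unfolding B0v_def using K0 Lam l2 by simp
  have Bj: "Bjv K L \<Lambda> j \<ge> 0" for j unfolding Bjv_def using K0 Lam l2 by simp
  have s0: "sqrt (B0v K L \<Lambda> / (2 * n)) \<le> \<epsilon> * (B0v K L \<Lambda> / (M * (3/5)) + 3/5) / 2"
    by (rule amgm_sqrt[OF B0 _ M e n nM']) simp
  have sh: "sqrt (\<Lambda> / (2 * n)) \<le> \<epsilon> * (\<Lambda> / (M * (11/40)) + 11/40) / 2"
    by (rule amgm_sqrt[OF Lam _ M e n nM']) simp
  have sj: "2 * (1 / (8 * 2^j)) * sqrt (Bjv K L \<Lambda> j / (2 * n))
           \<le> \<epsilon> * ((Bjv K L \<Lambda> j / 2^(j+1)) / M + 1 / (8 * 2^j)) / 2" for j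
  proof -
    have "2 * (1 / (8 * 2^j)) * sqrt (Bjv K L \<Lambda> j / (2 * n)) = sqrt ((4 * (1 / (8 * 2^j))^2 * Bjv K L \<Lambda> j) / (2 * n))"
    proof -
      have "(4 * (1 / (8 * 2^j))^2 * Bjv K L \<Lambda> j) / (2 * n) = (2 * (1 / (8 * (2::real)^j)))^2 * (Bjv K L \<Lambda> j / (2 * n))"
        by (simp add: power2_eq_square)
      then show ?thesis by (simp only: real_sqrt_mult real_sqrt_abs) simp
    qed
    also have "\<dots> \<le> \<epsilon> * ((4 * (1 / (8 * 2^j))^2 * Bjv K L \<Lambda> j) / (M * (1 / (8 * 2^j))) + 1 / (8 * 2^j)) / 2"
      by (rule amgm_sqrt[OF _ _ M e n nM']) (use Bj in auto)
    also have "(4 * (1 / (8 * 2^j))^2 * Bjv K L \<Lambda> j) / (M * (1 / (8 * (2::real)^j))) = (Bjv K L \<Lambda> j / 2^(j+1)) / M"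
      using M by (simp add: field_simps power2_eq_square)
    finally show ?thesis .
  qed
  have sum_sj: "(\<Sum>j\<in>{1..J}. 2 * (1 / (8 * 2^j)) * sqrt (Bjv K L \<Lambda> j / (2 * n)))
     \<le> \<epsilon> / 2 * ((\<Sum>j\<in>{1..J}. Bjv K L \<Lambda> j / 2^(j+1)) / M + (\<Sum>j\<in>{1..J}. 1 / (8 * 2^j)))"
  proof -
    have "(\<Sum>j\<in>{1..J}. 2 * (1 / (8 * 2^j)) * sqrt (Bjv K L \<Lambda> j / (2 * n)))
       \<le> (\<Sum>j\<in>{1..J}. \<epsilon> * ((Bjv K L \<Lambda> j / 2^(j+1)) / M + 1 / (8 * 2^j)) / 2)"
      by (intro sum_mono sj)
    also have "\<dots> = \<epsilon> / 2 * ((\<Sum>j\<in>{1..J}. Bjv K L \<Lambda> j / 2^(j+1)) / M + (\<Sum>j\<in>{1..J}. 1 / (8 * 2^j)))"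
    proof -
      have "(\<Sum>j\<in>{1..J}. \<epsilon> * ((Bjv K L \<Lambda> j / 2^(j+1)) / M + 1 / (8 * 2^j)) / 2)
          = (\<Sum>j\<in>{1..J}. \<epsilon> / 2 * ((Bjv K L \<Lambda> j / 2^(j+1)) / M) + \<epsilon> / 2 * (1 / (8 * 2^j)))"
        by (intro sum.cong refl) (simp add: algebra_simps)
      also have "\<dots> = \<epsilon> / 2 * (\<Sum>j\<in>{1..J}. (Bjv K L \<Lambda> j / 2^(j+1)) / M) + \<epsilon> / 2 * (\<Sum>j\<in>{1..J}. 1 / (8 * 2^j))"
        by (simp add: sum.distrib sum_distrib_left)
      also have "\<dots> = \<epsilon> / 2 * ((\<Sum>j\<in>{1..J}. Bjv K L \<Lambda> j / 2^(j+1)) / M + (\<Sum>j\<in>{1..J}. 1 / (8 * 2^j)))"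
        by (simp only: sum_divide_distrib[symmetric] distrib_left)
      finally show ?thesis .
    qed
    finally show ?thesis .
  qed
  define C where "C = K + 11 * real L + \<Lambda> + ln 2"
  have Bj_eq: "Bjv K L \<Lambda> j = C + real j * (2 * real L + ln 2)" for j
    unfolding Bjv_def C_def by (simp add: algebra_simps)
  have C0: "C \<ge> 0" unfolding C_def using K0 Lam l2 by simp
  have sumB: "(\<Sum>j\<in>{1..J}. Bjv K L \<Lambda> j / 2^(j+1)) \<le> C / 2 + (2 * real L + ln 2)"
  proof -
    have "(\<Sum>j\<in>{1..J}. Bjv K L \<Lambda> j / 2^(j+1)) = C * (\<Sum>j\<in>{1..J}. 1 / 2^(j+1)) + (2 * real L + ln 2) * (\<Sum>j\<in>{1..J}. real j / 2^(j+1))"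
      unfolding Bj_eq by (simp add: sum_distrib_left sum.distrib add_divide_distrib algebra_simps)
    also have "\<dots> \<le> C * (1/2) + (2 * real L + ln 2) * 1"
    proof (intro add_mono mult_left_mono)
      show "(\<Sum>j\<in>{1..J}. (1::real) / 2^(j+1)) \<le> 1/2" unfolding sum_half by simp
      show "(\<Sum>j\<in>{1..J}. real j / 2^(j+1)) \<le> 1" unfolding sum_jhalf by simp
    qed (use C0 l2 in auto)
    finally show ?thesis by simp
  qed
  have Q: "5/3 * B0v K L \<Lambda> + (C / 2 + (2 * real L + ln 2)) + 40/11 * \<Lambda> \<le> 998/1000 * M"
  proof -
    have "5/3 * B0v K L \<Lambda> + (C / 2 + (2 * real L + ln 2)) + 40/11 * \<Lambda>
        = 13/6 * K + 35/2 * real L + (13/6 + 40/11) * \<Lambda> + 19/6 * ln 2"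
      unfolding B0v_def C_def by (simp add: add_divide_distrib algebra_simps)
    also have "\<dots> \<le> 13/6 * (real L * lq + lf + 2 * real L) + 35/2 * real L + (13/6 + 40/11) * \<Lambda> + 19/6"
      using K l2 by (intro add_mono) auto
    also have "\<dots> \<le> 998/1000 * M"
    proof -
      define P where "P = real L * lq"
      have P: "0 \<le> P" using lq by (simp add: P_def)
      have M': "M = 3 * P + 24 * real L + 3 * lf' + 6 * \<Lambda>" unfolding M_def P_def by (simp add: algebra_simps)
      have L': "real L \<ge> 2" using L by simp
      show ?thesis unfolding M' P_def[symmetric] using lf Lam L' P by (simp add: field_simps)
    qed
    finally show ?thesis .
  qed
  have "sqrt (B0v K L \<Lambda> / (2 * n)) + (\<Sum>j\<in>{1..J}. 2 * (1 / (8 * 2^j)) * sqrt (Bjv K L \<Lambda> j / (2 * n)))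
           + sqrt (\<Lambda> / (2 * n))
        \<le> \<epsilon> * (B0v K L \<Lambda> / (M * (3/5)) + 3/5) / 2
          + \<epsilon> / 2 * ((C / 2 + (2 * real L + ln 2)) / M + 1/8)
          + \<epsilon> * (\<Lambda> / (M * (11/40)) + 11/40) / 2"
  proof (intro add_mono s0 sh order.trans[OF sum_sj])
    show "\<epsilon> / 2 * ((\<Sum>j\<in>{1..J}. Bjv K L \<Lambda> j / 2^(j+1)) / M + (\<Sum>j\<in>{1..J}. 1 / (8 * 2^j)))
        \<le> \<epsilon> / 2 * ((C / 2 + (2 * real L + ln 2)) / M + 1/8)"
      using sumB sum_theta M e by (intro mult_left_mono add_mono divide_right_mono) auto
  qed
  also have "\<dots> = \<epsilon> / 2 * ((5/3 * B0v K L \<Lambda> + (C / 2 + (2 * real L + ln 2)) + 40/11 * \<Lambda>) / M + 1)"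
    using M by (simp add: field_simps)
  also have "\<dots> \<le> \<epsilon> / 2 * (998/1000 * M / M + 1)"
    using Q M e by (intro mult_left_mono add_mono divide_right_mono) auto
  also have "\<dots> = 999/1000 * \<epsilon>" using M by simp
  finally show ?thesis .
qed



lemma l1d_sym: "l1d a b = l1d b a"
  unfolding l1d_def by (induction a arbitrary: b) (auto simp: zip_Cons1 abs_minus_commute split: list.splits)

lemma l1d_tri: "length a = length b \<Longrightarrow> length b = length c \<Longrightarrow> l1d a c \<le> l1d a b + l1d b c"
proof (induction a b c rule: list_induct3)
  case (Cons x xs y ys z zs)
  then show ?case by (simp add: l1d_def)
qed (simp add: l1d_def)

lemma nodes_leaves: "nodes f + 1 = 2 * leaves f"
  by (induction f) auto

lemma trees_sub: "trees q (2*k+1) \<subseteq> (\<Union>l\<in>{1..k+1}. TL q l)"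
proof
  fix f :: "'p ltree" assume "f \<in> trees q (2*k+1)"
  then have "valid_tree q f" "nodes f \<le> 2*k+1" by (auto simp: trees_def)
  moreover have "leaves f \<ge> 1" by (rule leaves_pos)
  ultimately show "f \<in> (\<Union>l\<in>{1..k+1}. TL q l)" using nodes_leaves[of f] by (auto simp: TL_def)
qed

lemma trees_leaves: "f \<in> trees q (2*k+1) \<Longrightarrow> leaves f \<le> k+1"
  using nodes_leaves[of f] by (auto simp: trees_def)

lemma trees_card:
  assumes q: "q \<ge> 1"
  shows "finite (trees q (2*k+1) :: ('p::finite) ltree set)"
    "real (card (trees q (2*k+1) :: 'p ltree set)) \<le> real (k+1) * 2^k * fact k * (real CARD('p) * real q)^(k+1)"
proof -
  define c where "c = real CARD('p) * real q"
  have "CARD('p) \<ge> 1" by (simp add: Suc_leI finite_UNIV_card_ge_0)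
  then have a: "real CARD('p) \<ge> 1" by simp
  have b: "real q \<ge> 1" using q by simp
  have "(1::real) * 1 \<le> real CARD('p) * real q" using a b by (intro mult_mono) auto
  then have c1: "c \<ge> 1" unfolding c_def by simp
  have "finite (TL q l :: 'p ltree set)" if "l \<in> {1..k+1}" for l
    using card_TL[where 'p='p, of l q] that by auto
  then have fin: "finite (\<Union>l\<in>{1..k+1}. (TL q l :: 'p ltree set))" by auto
  then show "finite (trees q (2*k+1) :: 'p ltree set)" using trees_sub finite_subset by blast
  have "card (trees q (2*k+1) :: 'p ltree set) \<le> card (\<Union>l\<in>{1..k+1}. (TL q l :: 'p ltree set))"
    by (intro card_mono fin trees_sub)
  also have "\<dots> \<le> (\<Sum>l\<in>{1..k+1}. card (TL q l :: 'p ltree set))" by (rule card_UN_le) simp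
  finally have "real (card (trees q (2*k+1) :: 'p ltree set)) \<le> (\<Sum>l\<in>{1..k+1}. real (card (TL q l :: 'p ltree set)))"
    by (simp flip: of_nat_sum)
  also have "\<dots> \<le> (\<Sum>l\<in>{1..k+1}. 2^k * fact k * c^(k+1))"
  proof (intro sum_mono)
    fix l assume l: "l \<in> {1..k+1}"
    have "real (card (TL q l :: 'p ltree set)) \<le> 2^(l-1) * fact (l-1) * c^l"
      using card_TL[where 'p='p, of l q] l by (auto simp: c_def)
    also have "\<dots> \<le> 2^k * fact k * c^(k+1)"
      using l c1 by (intro mult_mono power_increasing fact_mono) auto
    finally show "real (card (TL q l :: 'p ltree set)) \<le> 2^k * fact k * c^(k+1)" .
  qed
  also have "\<dots> = real (k+1) * 2^k * fact k * c^(k+1)" by simp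
  finally show "real (card (trees q (2*k+1) :: 'p ltree set)) \<le> real (k+1) * 2^k * fact k * (real CARD('p) * real q)^(k+1)"
    by (simp add: c_def)
qed

lemma Hm_memI:
  assumes "f \<in> trees q m" "length w = leaves f" "l1 w \<le> 1"
  shows "(\<lambda>(x,y). d y (heval \<phi> f w x)) \<in> Hm d \<phi> q m"
  using assms unfolding Hm_def Hclass_def Wclass_def l1_def by blast

lemma Hm_memD:
  assumes "h \<in> Hm d \<phi> q m"
  obtains f w where "f \<in> trees q m" "length w = leaves f" "l1 w \<le> 1" "h = (\<lambda>(x,y). d y (heval \<phi> f w x))"
  using assms unfolding Hm_def Hclass_def Wclass_def l1_def by blast

lemma Hm_range:
  assumes "h \<in> Hm d \<phi> q m" "snd z \<in> Y" "\<And>y t. y \<in> Y \<Longrightarrow> d y t \<in> {0..1}"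
  shows "h z \<in> {0..1}"
proof -
  obtain f w where "h = (\<lambda>(x,y). d y (heval \<phi> f w x))" using Hm_memD[OF assms(1)] by metis
  then show ?thesis using assms(2,3) by (cases z) auto
qed

lemma hf_lip:
  assumes phi: "\<And>i t. i \<in> {1..q} \<Longrightarrow> \<phi> i t \<in> {-1..1}"
    and dl: "\<And>y s t. y \<in> Y \<Longrightarrow> \<bar>d y s - d y t\<bar> \<le> \<bar>s - t\<bar>"
    and f: "valid_tree q f" and w: "length w = leaves f" "l1 w \<le> 1" and v: "length v = leaves f" "l1 v \<le> 1"
    and z: "snd z \<in> Y"
  shows "\<bar>(\<lambda>(x,y). d y (heval \<phi> f w x)) z - (\<lambda>(x,y). d y (heval \<phi> f v x)) z\<bar> \<le> l1d w v"
proof -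
  obtain x y where zz: "z = (x,y)" by (cases z)
  have phi': "\<bar>\<phi> i t\<bar> \<le> 1" if "i \<in> {1..q}" for i t using phi[OF that, of t] by auto
  have "\<bar>d y (heval \<phi> f w x) - d y (heval \<phi> f v x)\<bar> \<le> \<bar>heval \<phi> f w x - heval \<phi> f v x\<bar>"
    using dl z zz by simp
  also have "\<dots> \<le> l1d w v" by (rule heval_lip[where q=q and \<phi>=\<phi>, OF phi' f w(1) v(1) w(2) v(2)])
  finally show ?thesis using zz by simp
qed

lemma sum_meas:
  fixes Z :: "'a \<Rightarrow> real"
  assumes "Z \<in> borel_measurable D"
  shows "(\<lambda>S. \<Sum>i<n. Z (S i)) \<in> borel_measurable (PiM {..<n} (\<lambda>_. D))"
proof (rule borel_measurable_sum)
  fix i assume "i \<in> {..<n}"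
  then show "(\<lambda>S. Z (S i)) \<in> borel_measurable (PiM {..<n} (\<lambda>_. D))"
    by (intro measurable_compose[where f="\<lambda>S. S i", OF measurable_component_singleton assms]) auto
qed

lemma sum_le_sets:
  fixes Z :: "'a \<Rightarrow> real"
  assumes "Z \<in> borel_measurable D"
  shows "{S \<in> space (PiM {..<n} (\<lambda>_. D)). (\<Sum>i<n. Z (S i)) \<le> c} \<in> sets (PiM {..<n} (\<lambda>_. D))"
    "{S \<in> space (PiM {..<n} (\<lambda>_. D)). (\<Sum>i<n. Z (S i)) \<ge> c} \<in> sets (PiM {..<n} (\<lambda>_. D))"
proof -
  have g: "(\<lambda>S. \<Sum>i<n. Z (S i)) \<in> borel_measurable (PiM {..<n} (\<lambda>_. D))" by (rule sum_meas[OF assms])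
  have "{S \<in> space (PiM {..<n} (\<lambda>_. D)). (\<Sum>i<n. Z (S i)) \<le> c} = (\<lambda>S. \<Sum>i<n. Z (S i)) -` {..c} \<inter> space (PiM {..<n} (\<lambda>_. D))"
    by auto
  then show "{S \<in> space (PiM {..<n} (\<lambda>_. D)). (\<Sum>i<n. Z (S i)) \<le> c} \<in> sets (PiM {..<n} (\<lambda>_. D))"
    using measurable_sets[OF g atMost_borel] by simp
  have "{S \<in> space (PiM {..<n} (\<lambda>_. D)). (\<Sum>i<n. Z (S i)) \<ge> c} = (\<lambda>S. \<Sum>i<n. Z (S i)) -` {c..} \<inter> space (PiM {..<n} (\<lambda>_. D))"
    by auto
  then show "{S \<in> space (PiM {..<n} (\<lambda>_. D)). (\<Sum>i<n. Z (S i)) \<ge> c} \<in> sets (PiM {..<n} (\<lambda>_. D))"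
    using measurable_sets[OF g atLeast_borel] by simp
qed

lemma int_diff_le:
  fixes h g :: "'a \<Rightarrow> real"
  assumes "prob_space D" "integrable D h" "integrable D g" "AE z in D. h z - g z \<le> r"
  shows "integral\<^sup>L D h - integral\<^sup>L D g \<le> r"
proof -
  interpret prob_space D by fact
  have "integral\<^sup>L D h - integral\<^sup>L D g = integral\<^sup>L D (\<lambda>z. h z - g z)"
    using assms by (simp add: Bochner_Integration.integral_diff)
  also have "\<dots> \<le> integral\<^sup>L D (\<lambda>_. r)"
  proof (rule integral_mono_AE)
    show "integrable D (\<lambda>z. h z - g z)" using assms by simp
    show "integrable D (\<lambda>_. r)" by simp
  qed (use assms in auto)
  also have "integral\<^sup>L D (\<lambda>_. r) = r" by (simp add: prob_space)
  finally show ?thesis .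
qed

lemma telescope: "(\<Sum>j\<in>{1..J::nat}. (g j - g (j - 1) :: real)) = g J - g 0"
  by (induction J) auto



theorem corollary1:
  fixes q k n :: nat
    and \<phi> :: "nat \<Rightarrow> real \<Rightarrow> real"
    and Y :: "real set"
    and d :: "real \<Rightarrow> real \<Rightarrow> real"
    and D :: "((real ^ 'p) \<times> real) measure"
    and hhat :: "(nat \<Rightarrow> (real ^ 'p) \<times> real) \<Rightarrow> ((real ^ 'p) \<times> real \<Rightarrow> real)"
    and hbar :: "(real ^ 'p) \<times> real \<Rightarrow> real"
    and \<delta> \<epsilon> :: real
  assumes q: "q \<ge> 1" and k: "k \<ge> 1"
    and phi_range: "\<And>i t. i \<in> {1..q} \<Longrightarrow> \<phi> i t \<in> {-1..1}"
    and d_range: "\<And>y t. y \<in> Y \<Longrightarrow> d y t \<in> {0..1}"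
    and d_lip: "\<And>y s t. y \<in> Y \<Longrightarrow> \<bar>d y s - d y t\<bar> \<le> \<bar>s - t\<bar>"
    and D_prob: "prob_space D"
    and D_sets: "sets D = sets borel"
    and D_Y: "AE z in D. snd z \<in> Y"
    and H_meas: "\<And>h. h \<in> Hm d \<phi> q (2*k+1) \<Longrightarrow> h \<in> borel_measurable D"
    and hhat_min: "\<And>S. S \<in> space (PiM {..<n} (\<lambda>_. D)) \<Longrightarrow>
        hhat S \<in> Hm d \<phi> q (2*k+1) \<and>
        (\<forall>h \<in> Hm d \<phi> q (2*k+1). emp_risk n S (hhat S) \<le> emp_risk n S h)"
    and hbar_min: "hbar \<in> Hm d \<phi> q (2*k+1)"
        "\<And>h. h \<in> Hm d \<phi> q (2*k+1) \<Longrightarrow> integral\<^sup>L D hbar \<le> integral\<^sup>L D h"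
    and delta: "\<delta> \<in> {0<..<1}" and eps: "\<epsilon> \<in> {0<..<1}"
    and n_bound: "real n \<ge> (3 * (real k + 1) * (ln (real (CARD('p) * q)) + 8)
        + 3 * ln (8 * real k * fact k) + 6 * ln (2 / \<delta>)) / (2 * \<epsilon>^2)"
  shows "\<exists>A \<in> sets (PiM {..<n} (\<lambda>_. D)).
           measure (PiM {..<n} (\<lambda>_. D)) A \<ge> 1 - \<delta> \<and>
           (\<forall>S \<in> A. integral\<^sup>L D (hhat S) - integral\<^sup>L D hbar \<le> \<epsilon>)"
proof -
  let ?P = "PiM {..<n} (\<lambda>_. D)"
  interpret D: prob_space D by (rule D_prob)
  have Pprob: "prob_space ?P" by (rule prob_space_PiM) (rule D_prob)
  interpret P: prob_space ?P by (rule Pprob)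
  define L where "L = k + 1"
  define c where "c = real CARD('p) * real q"
  define \<Lambda> where "\<Lambda> = ln (2 / \<delta>)"
  define Tb where "Tb = real (k+1) * 2^k * fact k * c^(k+1)"
  define K where "K = ln Tb"
  define F where "F = (trees q (2*k+1) :: 'p ltree set)"
  define hf where "hf = (\<lambda>f w. (\<lambda>(x,y). d y (heval \<phi> f w x)) :: ((real^'p) \<times> real \<Rightarrow> real))"
  define Nt where "Nt = (\<lambda>j f. net (mlev L j) (leaves (f :: 'p ltree)))"
  define \<rho> where "\<rho> = (\<lambda>j::nat. 1 / (8 * 2^j) :: real)"
  have dl: "0 < \<delta>" "\<delta> < 1" and el: "0 < \<epsilon>" "\<epsilon> < 1" using delta eps by auto
  have L2: "L \<ge> 2" using k by (simp add: L_def)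
  have CARD1: "real CARD('p) \<ge> 1" by (simp add: Suc_leI finite_UNIV_card_ge_0)
  have q1: "real q \<ge> 1" using q by simp
  have "(1::real) * 1 \<le> real CARD('p) * real q" using CARD1 q1 by (intro mult_mono) auto
  then have c1: "c \<ge> 1" unfolding c_def by simp
  have Lam: "\<Lambda> > 0" unfolding \<Lambda>_def using dl by simp
  have Tb1: "Tb \<ge> 1"
  proof -
    have "(1::real) \<le> real (k+1)" by simp
    moreover have "(1::real) \<le> 2^k" by simp
    moreover have "(1::real) \<le> fact k" by simp
    moreover have "(1::real) \<le> c^(k+1)" using c1 by (rule one_le_power)
    ultimately have "(1::real) * 1 * 1 * 1 \<le> real (k+1) * 2^k * fact k * c^(k+1)"
      by (intro mult_mono) auto
    then show ?thesis unfolding Tb_def by simp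
  qed
  have K0: "K \<ge> 0" unfolding K_def using Tb1 by simp
  define lq where "lq = ln c"
  define lf where "lf = ln (fact k :: real)"
  define lf' where "lf' = ln (8 * real k * fact k)"
  have lq0: "lq \<ge> 0" unfolding lq_def using c1 by simp
  have lf0: "lf \<ge> 0" unfolding lf_def by simp
  have lflf: "lf \<le> lf'" unfolding lf_def lf'_def using k by (intro ln_mono) auto
  have numer: "3 * (real k + 1) * (ln (real (CARD('p) * q)) + 8) + 3 * ln (8 * real k * fact k) + 6 * ln (2 / \<delta>)
     = 3 * real L * (lq + 8) + 3 * lf' + 6 * \<Lambda>"
    by (simp add: L_def lq_def c_def lf'_def \<Lambda>_def)
  have numpos: "3 * real L * (lq + 8) + 3 * lf' + 6 * \<Lambda> > 0"
    using lq0 lf0 lflf Lam L2 by (simp add: add_pos_nonneg)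
  have nM: "2 * real n * \<epsilon>^2 \<ge> 3 * real L * (lq + 8) + 3 * lf' + 6 * \<Lambda>"
    using n_bound el unfolding numer by (simp add: pos_divide_le_eq mult_ac)
  have npos: "real n > 0"
  proof -
    have "0 < 3 * real L * (lq + 8) + 3 * lf' + 6 * \<Lambda>" by (rule numpos)
    also have "\<dots> \<le> 2 * real n * \<epsilon>^2" by (rule nM)
    finally show ?thesis using el by (simp add: zero_less_mult_iff)
  qed
  then have n0: "n > 0" by simp
  have Kb: "K \<le> real L * lq + lf + 2 * real L"
  proof -
    have p1: "real (k+1) > 0" and p2: "(2::real)^k > 0" and p3: "(fact k :: real) > 0" and p4: "c^(k+1) > 0"
      using c1 by auto
    have "K = ln (real (k+1)) + ln (2^k) + ln (fact k) + ln (c^(k+1))"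
      unfolding K_def Tb_def using p1 p2 p3 p4 c1
      by (simp add: ln_mult)
    also have "ln ((2::real)^k) = real k * ln 2" by (simp add: ln_realpow)
    also have "ln (c^(k+1)) = real (k+1) * lq" unfolding lq_def using c1 by (simp only: ln_realpow[of c "k+1"])
    finally have Keq: "K = ln (real (k+1)) + real k * ln 2 + lf + real (k+1) * lq" unfolding lf_def .
    have a: "ln (real (k+1)) \<le> real k" using ln_add_one_self_le_self[of "real k"] by (simp add: add.commute)
    have b: "real k * ln 2 \<le> real k * 1" using ln2_le1 by (intro mult_left_mono) auto
    show ?thesis unfolding L_def using Keq a b by simp
  qed
  have arith: "sqrt (B0v K L \<Lambda> / (2 * real n)) + (\<Sum>j\<in>{1..J}. 2 * (1 / (8 * 2^j)) * sqrt (Bjv K L \<Lambda> j / (2 * real n)))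
           + sqrt (\<Lambda> / (2 * real n)) \<le> 999/1000 * \<epsilon>" for J
    by (rule final_arith[OF npos el(1) _ K0 lq0 lf0 lflf Kb nM L2]) (use Lam in auto)
  obtain J :: nat where J: "1000 / (12 * \<epsilon>) < 2^J" using real_arch_pow[of 2 "1000 / (12 * \<epsilon>)"] by auto
  have rJ: "2 * (1 / (24 * 2^J)) \<le> \<epsilon> / 1000"
  proof -
    have "1000 < 2^J * (12 * \<epsilon>)" using J el by (simp add: divide_less_eq mult.commute)
    then show ?thesis using el by (simp add: field_simps)
  qed
  have finF: "finite F" unfolding F_def by (rule trees_card(1)[OF q])
  have cardF: "real (card F) \<le> Tb" unfolding F_def Tb_def c_def by (rule trees_card(2)[OF q])
  have validF: "valid_tree q f" "leaves f \<le> L" if "f \<in> F" for f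
    using that trees_leaves[of f q k] by (auto simp: F_def trees_def L_def)
  have L0: "L > 0" by (simp add: L_def)
  have mpos: "mlev L j > 0" for j using L0 by (simp add: mlev_def)
  have Nt_props: "length v = leaves f" "l1 v \<le> 1" if "v \<in> Nt j f" for v j f
    using net_props[OF mpos that[unfolded Nt_def]] by auto
  have Nt_fin: "finite (Nt j f)" "real (card (Nt j f)) \<le> exp (real L * (6 + real j))" if "f \<in> F" for j f
    using card_net_lev[OF validF(2)[OF that] L0, of j] by (auto simp: Nt_def)
  have hf_Hm: "hf f v \<in> Hm d \<phi> q (2*k+1)" if "f \<in> F" "length v = leaves f" "l1 v \<le> 1" for f v
    unfolding hf_def using Hm_memI[of f q "2*k+1" v] that by (auto simp: F_def)
  have phi': "\<bar>\<phi> i t\<bar> \<le> 1" if "i \<in> {1..q}" for i t using phi_range[OF that, of t] by auto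
  have Hm_meas: "h \<in> borel_measurable D" if "h \<in> Hm d \<phi> q (2*k+1)" for h using H_meas that by auto
  have Hm_AE: "AE z in D. h z \<in> {0..1}" if "h \<in> Hm d \<phi> q (2*k+1)" for h
    using D_Y by eventually_elim (use Hm_range[OF that _ d_range] in auto)
  have Hm_int: "integrable D h" if "h \<in> Hm d \<phi> q (2*k+1)" for h
  proof (rule D.integrable_const_bound[where B=1])
    show "AE x in D. norm (h x) \<le> 1" using Hm_AE[OF that] by eventually_elim auto
  qed (use Hm_meas[OF that] in auto)
  have lipY: "\<bar>hf f w z - hf f v z\<bar> \<le> l1d w v"
    if "f \<in> F" "length w = leaves f" "l1 w \<le> 1" "length v = leaves f" "l1 v \<le> 1" "snd z \<in> Y" for f w v z
    unfolding hf_def by (rule hf_lip[OF phi_range d_lip validF(1)[OF that(1)] that(2-6)])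
  obtain N where N: "{z \<in> space D. \<not> snd z \<in> Y} \<subseteq> N" "emeasure D N = 0" "N \<in> sets D"
    using D_Y by (rule AE_E)
  define G0 where "G0 = {S \<in> space ?P. (\<Sum>i<n. indicator N (S i) :: real) \<le> 0}"
  have G0_eq: "G0 = {S \<in> space ?P. \<forall>i<n. S i \<notin> N}"
  proof -
    have "(\<Sum>i<n. indicator N (S i) :: real) \<le> 0 \<longleftrightarrow> (\<forall>i<n. S i \<notin> N)" for S :: "nat \<Rightarrow> (real^'p) \<times> real"
    proof -
      have "(\<Sum>i<n. indicator N (S i) :: real) = 0 \<longleftrightarrow> (\<forall>i\<in>{..<n}. (indicator N (S i) :: real) = 0)"
        by (intro sum_nonneg_eq_0_iff) auto
      moreover have "(\<Sum>i<n. indicator N (S i) :: real) \<ge> 0" by (intro sum_nonneg) auto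
      ultimately show ?thesis by (auto simp: indicator_def)
    qed
    then show ?thesis unfolding G0_def by auto
  qed
  have G0_sets: "G0 \<in> sets ?P" unfolding G0_def
    by (rule sum_le_sets(1)) (use N(3) in auto)
  have G0_prob: "measure ?P G0 = 1"
  proof -
    have ae1: "AE z in D. z \<notin> N" using N(2,3) by (intro AE_not_in) (simp add: null_sets_def)
    have ae2: "AE S in ?P. S i \<notin> N" if "i \<in> {..<n}" for i
      by (rule AE_PiM_component[where P="\<lambda>z. z \<notin> N"]) (use D_prob that ae1 in auto)
    have ae3: "AE S in ?P. \<forall>i\<in>{..<n}. S i \<notin> N"
      by (rule eventually_ball_finite) (use ae2 in auto)
    have G0': "G0 = {S \<in> space ?P. \<forall>i\<in>{..<n}. S i \<notin> N}" unfolding G0_eq by auto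
    have sets: "{S \<in> space ?P. \<forall>i\<in>{..<n}. S i \<notin> N} \<in> sets ?P" using G0_sets unfolding G0' .
    show ?thesis unfolding G0' using P.prob_Collect_eq_1[OF sets] ae3 by blast
  qed
  define s0 where "s0 = sqrt (B0v K L \<Lambda> / (2 * real n))"
  define sj where "sj = (\<lambda>j. 2 * \<rho> j * sqrt (Bjv K L \<Lambda> j / (2 * real n)))"
  define sh where "sh = sqrt (\<Lambda> / (2 * real n))"
  define Eh where "Eh = {S \<in> space ?P. (\<Sum>i<n. hbar (S i)) \<ge> real n * integral\<^sup>L D hbar + real n * sh}"
  define E0 where "E0 = (\<lambda>(f,v). {S \<in> space ?P. (\<Sum>i<n. hf f v (S i)) \<le> real n * integral\<^sup>L D (hf f v) - real n * s0})"
  define Ej where "Ej = (\<lambda>j (f,v,u). {S \<in> space ?P. (\<Sum>i<n. hf f v (S i) - hf f u (S i)) \<le> real n * integral\<^sup>L D (\<lambda>z. hf f v z - hf f u z) - real n * sj j})"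
  define I0 where "I0 = Sigma F (Nt 0)"
  define Ij where "Ij = (\<lambda>j. Sigma F (\<lambda>f. {(v,u). v \<in> Nt j f \<and> u \<in> Nt (j-1) f \<and> l1d v u \<le> \<rho> j}))"
  define U0 where "U0 = (\<Union>i\<in>I0. E0 i)"
  define UJ where "UJ = (\<Union>j\<in>{1..J}. \<Union>i\<in>Ij j. Ej j i)"
  define A where "A = G0 - (Eh \<union> U0 \<union> UJ)"
  have B0pos: "B0v K L \<Lambda> \<ge> 0" unfolding B0v_def using K0 Lam ln2_le1 by simp
  have Bjpos: "Bjv K L \<Lambda> j \<ge> 0" for j unfolding Bjv_def using K0 Lam ln2_le1 by simp
  have rhopos: "\<rho> j > 0" for j by (simp add: \<rho>_def)
  have hbarH: "hbar \<in> Hm d \<phi> q (2*k+1)" by (rule hbar_min(1))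
  have I0D: "f \<in> F" "v \<in> Nt 0 f" "hf f v \<in> Hm d \<phi> q (2*k+1)" if "(f,v) \<in> I0" for f v
    using that hf_Hm Nt_props by (auto simp: I0_def)
  have IjD: "f \<in> F" "v \<in> Nt j f" "u \<in> Nt (j-1) f" "l1d v u \<le> \<rho> j"
      "hf f v \<in> Hm d \<phi> q (2*k+1)" "hf f u \<in> Hm d \<phi> q (2*k+1)" if "(f,v,u) \<in> Ij j" for f v u j
    using that hf_Hm Nt_props by (auto simp: Ij_def)
  have Eh_sets: "Eh \<in> sets ?P" unfolding Eh_def by (rule sum_le_sets(2)[OF Hm_meas[OF hbarH]])
  have E0_sets: "E0 i \<in> sets ?P" if "i \<in> I0" for i
  proof -
    obtain f v where i: "i = (f,v)" by (cases i)
    show ?thesis unfolding i E0_def using I0D[of f v] that i by (auto intro!: sum_le_sets(1) Hm_meas)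
  qed
  have Ej_sets: "Ej j i \<in> sets ?P" if "i \<in> Ij j" for i j
  proof -
    obtain f v u where i: "i = (f,v,u)" by (cases i) auto
    have m: "(\<lambda>z. hf f v z - hf f u z) \<in> borel_measurable D"
      using IjD[of f v u j] that i Hm_meas by auto
    show ?thesis unfolding i Ej_def using sum_le_sets(1)[OF m] by simp
  qed
  have expL: "exp (- \<Lambda>) = \<delta> / 2" unfolding \<Lambda>_def using dl by (simp add: exp_minus exp_ln)
  have pEh: "measure ?P Eh \<le> \<delta> / 2"
  proof -
    have "0 \<le> \<Lambda> / (2 * real n)" using Lam npos by (intro divide_nonneg_pos) auto
    then have sh0: "sh \<ge> 0" by (simp add: sh_def)
    have bnd: "measure ?P Eh \<le> exp (-2 * real n * sh\<^sup>2 / (1 - 0)\<^sup>2)"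
      unfolding Eh_def by (rule hoeff_prod(2)[OF D_prob n0 Hm_meas[OF hbarH] Hm_AE[OF hbarH] zero_less_one sh0])
    have "0 \<le> \<Lambda> / (2 * real n)" using Lam npos by (intro divide_nonneg_pos) auto
    then have eq: "-2 * real n * sh\<^sup>2 / (1 - 0)\<^sup>2 = - \<Lambda>" unfolding sh_def using npos by simp
    show ?thesis using bnd eq expL by simp
  qed
  have p0: "measure ?P (E0 i) \<le> exp (- B0v K L \<Lambda>)" if "i \<in> I0" for i
  proof -
    obtain f v where i: "i = (f,v)" by (cases i)
    have H: "hf f v \<in> Hm d \<phi> q (2*k+1)" using I0D[of f v] that i by auto
    have "0 \<le> B0v K L \<Lambda> / (2 * real n)" using B0pos npos by (intro divide_nonneg_pos) auto
    then have s00: "s0 \<ge> 0" by (simp add: s0_def)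
    have bnd: "measure ?P (E0 i) \<le> exp (-2 * real n * s0\<^sup>2 / (1 - 0)\<^sup>2)"
      unfolding i E0_def by (simp only: case_prod_conv) (rule hoeff_prod(1)[OF D_prob n0 Hm_meas[OF H] Hm_AE[OF H] zero_less_one s00])
    have "0 \<le> B0v K L \<Lambda> / (2 * real n)" using B0pos npos by (intro divide_nonneg_pos) auto
    then have eq: "-2 * real n * s0\<^sup>2 / (1 - 0)\<^sup>2 = - B0v K L \<Lambda>" unfolding s0_def using npos by simp
    show ?thesis using bnd eq by simp
  qed
  have pj: "measure ?P (Ej j i) \<le> exp (- Bjv K L \<Lambda> j)" if "i \<in> Ij j" for i j
  proof -
    obtain f v u where i: "i = (f,v,u)" by (cases i) auto
    note D = IjD[of f v u j, OF that[unfolded i]]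
    have m: "(\<lambda>z. hf f v z - hf f u z) \<in> borel_measurable D" using D Hm_meas by auto
    have lv: "length v = leaves f" "l1 v \<le> 1" "length u = leaves f" "l1 u \<le> 1"
      using Nt_props D by auto
    have ae: "AE z in D. hf f v z - hf f u z \<in> {- \<rho> j..\<rho> j}"
      using D_Y
    proof eventually_elim
      case (elim z)
      have "\<bar>hf f v z - hf f u z\<bar> \<le> l1d v u" using lipY[OF D(1) lv elim] .
      then show ?case using D(4) by (auto simp: abs_le_iff)
    qed
    have "0 \<le> Bjv K L \<Lambda> j / (2 * real n)" using Bjpos[of j] npos by (intro divide_nonneg_pos) auto
    then have sj0: "sj j \<ge> 0" using rhopos[of j] by (simp add: sj_def)
    have "measure ?P (Ej j i) \<le> exp (-2 * real n * (sj j)\<^sup>2 / (\<rho> j - - \<rho> j)\<^sup>2)"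
      unfolding i Ej_def using hoeff_prod(1)[OF D_prob n0 m ae _ sj0] rhopos[of j] by simp
    also have "-2 * real n * (sj j)\<^sup>2 / (\<rho> j - - \<rho> j)\<^sup>2 = - Bjv K L \<Lambda> j"
    proof -
      have "0 \<le> Bjv K L \<Lambda> j / (2 * real n)" using Bjpos[of j] npos by (intro divide_nonneg_pos) auto
      then have "(sj j)\<^sup>2 = 4 * (\<rho> j)\<^sup>2 * (Bjv K L \<Lambda> j / (2 * real n))"
        unfolding sj_def by (simp add: power_mult_distrib)
      then show ?thesis using npos rhopos[of j] by (simp add: field_simps power2_eq_square)
    qed
    finally show ?thesis .
  qed
  have TbK: "Tb = exp K" unfolding K_def using Tb1 by simp
  have finI0: "finite I0" unfolding I0_def using finF Nt_fin by auto
  have Ij_sub: "Ij j \<subseteq> Sigma F (\<lambda>f. Nt j f \<times> Nt (j-1) f)" for j unfolding Ij_def by auto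
  have finIj: "finite (Ij j)" for j
    by (rule finite_subset[OF Ij_sub]) (use finF Nt_fin in auto)
  have cardI0: "real (card I0) \<le> Tb * exp (real L * 6)"
  proof -
    have "card I0 = (\<Sum>f\<in>F. card (Nt 0 f))" unfolding I0_def by (rule card_SigmaI) (use finF Nt_fin in auto)
    then have "real (card I0) = (\<Sum>f\<in>F. real (card (Nt 0 f)))" by simp
    also have "\<dots> \<le> (\<Sum>f\<in>F. exp (real L * 6))" using Nt_fin(2)[of _ 0] by (intro sum_mono) auto
    also have "\<dots> = real (card F) * exp (real L * 6)" by simp
    also have "\<dots> \<le> Tb * exp (real L * 6)" using cardF by (intro mult_right_mono) auto
    finally show ?thesis .
  qed
  have cardIj: "real (card (Ij j)) \<le> Tb * (exp (real L * (6 + real j)) * exp (real L * (6 + real (j-1))))" for j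
  proof -
    have fS: "finite (Sigma F (\<lambda>f. Nt j f \<times> Nt (j-1) f))" using finF Nt_fin by auto
    have "card (Ij j) \<le> card (Sigma F (\<lambda>f. Nt j f \<times> Nt (j-1) f))" by (rule card_mono[OF fS Ij_sub])
    also have "\<dots> = (\<Sum>f\<in>F. card (Nt j f \<times> Nt (j-1) f))" by (rule card_SigmaI) (use finF Nt_fin in auto)
    finally have "real (card (Ij j)) \<le> (\<Sum>f\<in>F. real (card (Nt j f)) * real (card (Nt (j-1) f)))"
      by (simp add: card_cartesian_product flip: of_nat_sum of_nat_mult)
    also have "\<dots> \<le> (\<Sum>f\<in>F. exp (real L * (6 + real j)) * exp (real L * (6 + real (j-1))))"
      using Nt_fin(2) by (intro sum_mono mult_mono) auto
    also have "\<dots> = real (card F) * (exp (real L * (6 + real j)) * exp (real L * (6 + real (j-1))))" by simp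
    also have "\<dots> \<le> Tb * (exp (real L * (6 + real j)) * exp (real L * (6 + real (j-1))))"
      using cardF by (intro mult_right_mono) auto
    finally show ?thesis .
  qed
  have pU0: "measure ?P U0 \<le> \<delta> / 4"
  proof -
    have "measure ?P U0 \<le> (\<Sum>i\<in>I0. measure ?P (E0 i))"
      unfolding U0_def by (rule P.finite_measure_subadditive_finite[OF finI0]) (use E0_sets in auto)
    also have "\<dots> \<le> (\<Sum>i\<in>I0. exp (- B0v K L \<Lambda>))" by (intro sum_mono p0)
    also have "\<dots> = real (card I0) * exp (- B0v K L \<Lambda>)" by simp
    also have "\<dots> \<le> Tb * exp (real L * 6) * exp (- B0v K L \<Lambda>)"
      using cardI0 by (intro mult_right_mono) auto
    also have "Tb * exp (real L * 6) * exp (- B0v K L \<Lambda>) = exp (- \<Lambda>) / 2"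
    proof -
      have "exp K * exp (real L * 6) * exp (- B0v K L \<Lambda>) = exp (K + real L * 6 + - B0v K L \<Lambda>)"
        by (simp only: exp_add)
      also have "K + real L * 6 + - B0v K L \<Lambda> = - \<Lambda> + - ln 2" by (simp add: B0v_def)
      also have "exp (- \<Lambda> + - ln 2) = exp (- \<Lambda>) / 2" by (simp only: exp_add) (simp add: exp_minus)
      finally show ?thesis unfolding TbK .
    qed
    finally show ?thesis using expL by simp
  qed
  have pUj: "measure ?P (\<Union>i\<in>Ij j. Ej j i) \<le> \<delta> / 2 * (1 / 2^(j+1))" if j: "j \<ge> 1" for j
  proof -
    have "measure ?P (\<Union>i\<in>Ij j. Ej j i) \<le> (\<Sum>i\<in>Ij j. measure ?P (Ej j i))"
      by (rule P.finite_measure_subadditive_finite[OF finIj]) (use Ej_sets in auto)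
    also have "\<dots> \<le> (\<Sum>i\<in>Ij j. exp (- Bjv K L \<Lambda> j))" by (intro sum_mono pj)
    also have "\<dots> = real (card (Ij j)) * exp (- Bjv K L \<Lambda> j)" by simp
    also have "\<dots> \<le> Tb * (exp (real L * (6 + real j)) * exp (real L * (6 + real (j-1)))) * exp (- Bjv K L \<Lambda> j)"
      using cardIj by (intro mult_right_mono) auto
    also have "\<dots> = exp (- \<Lambda>) * exp (- ((real j + 1) * ln 2))"
    proof -
      have rj: "real (j - 1) = real j - 1" using j by simp
      have "exp K * (exp (real L * (6 + real j)) * exp (real L * (6 + real (j-1)))) * exp (- Bjv K L \<Lambda> j)
          = exp (K + (real L * (6 + real j) + real L * (6 + real (j-1))) + - Bjv K L \<Lambda> j)"
        by (simp only: exp_add)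
      also have "K + (real L * (6 + real j) + real L * (6 + real (j-1))) + - Bjv K L \<Lambda> j = - \<Lambda> + - ((real j + 1) * ln 2)"
        unfolding Bjv_def rj by (simp add: algebra_simps)
      also have "exp (- \<Lambda> + - ((real j + 1) * ln 2)) = exp (- \<Lambda>) * exp (- ((real j + 1) * ln 2))" by (simp only: exp_add)
      finally show ?thesis unfolding TbK .
    qed
    also have "exp (- ((real j + 1) * ln 2)) = 1 / 2^(j+1)"
    proof -
      have "exp ((real j + 1) * ln 2) = exp (ln 2) ^ (j+1)"
        by (metis exp_of_nat_mult of_nat_Suc Suc_eq_plus1 add.commute)
      then show ?thesis by (simp add: exp_minus inverse_eq_divide)
    qed
    finally show ?thesis using expL by simp
  qed
  have Uj_sets: "(\<Union>i\<in>Ij j. Ej j i) \<in> sets ?P" for j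
    using finIj[of j] Ej_sets by (intro sets.finite_UN) auto
  have pUJ: "measure ?P UJ \<le> \<delta> / 4"
  proof -
    have "measure ?P UJ \<le> (\<Sum>j\<in>{1..J}. measure ?P (\<Union>i\<in>Ij j. Ej j i))"
      unfolding UJ_def by (rule P.finite_measure_subadditive_finite) (use Uj_sets in auto)
    also have "\<dots> \<le> (\<Sum>j\<in>{1..J}. \<delta> / 2 * (1 / 2^(j+1)))" by (intro sum_mono pUj) auto
    also have "\<dots> = \<delta> / 2 * (\<Sum>j\<in>{1..J}. 1 / 2^(j+1))" by (simp add: sum_distrib_left)
    also have "\<dots> \<le> \<delta> / 2 * (1/2)" unfolding sum_half using dl by (intro mult_left_mono) auto
    finally show ?thesis by simp
  qed
  have U0_sets: "U0 \<in> sets ?P" unfolding U0_def using finI0 E0_sets by (intro sets.finite_UN) auto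
  have UJ_sets: "UJ \<in> sets ?P" unfolding UJ_def by (rule sets.finite_UN) (use Uj_sets in auto)
  have A_sets: "A \<in> sets ?P" unfolding A_def using G0_sets Eh_sets U0_sets UJ_sets by auto
  have pA: "measure ?P A \<ge> 1 - \<delta>"
  proof -
    have "measure ?P G0 \<le> measure ?P (A \<union> (Eh \<union> U0 \<union> UJ))"
      by (intro P.finite_measure_mono) (use A_sets G0_sets Eh_sets U0_sets UJ_sets in \<open>auto simp: A_def\<close>)
    also have "\<dots> \<le> measure ?P A + measure ?P (Eh \<union> U0 \<union> UJ)"
      by (intro measure_Un_le) (use A_sets Eh_sets U0_sets UJ_sets in auto)
    finally have m1: "measure ?P G0 \<le> measure ?P A + measure ?P (Eh \<union> U0 \<union> UJ)" .
    have m2: "measure ?P (Eh \<union> U0 \<union> UJ) \<le> measure ?P (Eh \<union> U0) + measure ?P UJ"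
      using Eh_sets U0_sets UJ_sets by (intro measure_Un_le) auto
    have m3: "measure ?P (Eh \<union> U0) \<le> measure ?P Eh + measure ?P U0"
      using Eh_sets U0_sets by (intro measure_Un_le) auto
    show ?thesis using m1 m2 m3 G0_prob pEh pU0 pUJ by linarith
  qed
  have good: "integral\<^sup>L D (hhat S) - integral\<^sup>L D hbar \<le> \<epsilon>" if SA: "S \<in> A" for S
  proof -
    have S: "S \<in> space ?P" "\<forall>i<n. S i \<notin> N" using SA G0_eq by (auto simp: A_def)
    have notEh: "S \<notin> Eh" and notU0: "S \<notin> U0" and notUJ: "S \<notin> UJ" using SA by (auto simp: A_def)
    have SD: "S i \<in> space D" if "i < n" for i using S(1) that by (auto simp: space_PiM PiE_def Pi_def)
    have SY: "snd (S i) \<in> Y" if "i < n" for i using SD[OF that] S(2) that N(1) by blast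
    have hhatH: "hhat S \<in> Hm d \<phi> q (2*k+1)" using hhat_min[OF S(1)] by auto
    obtain f w where fw: "f \<in> trees q (2*k+1)" "length w = leaves f" "l1 w \<le> 1" "hhat S = hf f w"
      using Hm_memD[OF hhatH] unfolding hf_def by metis
    have fF: "f \<in> F" using fw by (simp add: F_def)
    define v where "v = (\<lambda>j. rnd (mlev L j) w)"
    have vN: "v j \<in> Nt j f" for j unfolding v_def Nt_def using rnd_net[OF mpos fw(3)] fw(2) by metis
    have vl: "length (v j) = leaves f" "l1 (v j) \<le> 1" for j using Nt_props[OF vN] by auto
    have vd: "l1d w (v j) \<le> 1 / (24 * 2^j)" for j
    proof -
      have "l1d w (v j) \<le> real (length w) / real (mlev L j)" unfolding v_def by (rule l1d_rnd[OF mpos])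
      also have "\<dots> \<le> real L / real (mlev L j)" using fw(2) validF(2)[OF fF] mpos[of j] by (intro divide_right_mono) auto
      also have "\<dots> = 1 / (24 * 2^j)" using L0 by (simp add: mlev_def)
      finally show ?thesis .
    qed
    define emp where "emp = (\<lambda>g :: (real^'p) \<times> real \<Rightarrow> real. (\<Sum>i<n. g (S i)) / real n)"
    define Dl where "Dl = (\<lambda>j. integral\<^sup>L D (hf f (v j)) - emp (hf f (v j)))"
    have hvH: "hf f (v j) \<in> Hm d \<phi> q (2*k+1)" for j using hf_Hm[OF fF vl] .
    have D0: "Dl 0 \<le> s0"
    proof -
      have "(f, v 0) \<in> I0" using fF vN[of 0] by (simp add: I0_def)
      then have "S \<notin> E0 (f, v 0)" using notU0 by (auto simp: U0_def)
      then have lt: "(\<Sum>i<n. hf f (v 0) (S i)) > real n * integral\<^sup>L D (hf f (v 0)) - real n * s0"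
        using S(1) by (auto simp: E0_def)
      have "integral\<^sup>L D (hf f (v 0)) - s0 < (\<Sum>i<n. hf f (v 0) (S i)) / real n"
        using lt npos by (simp add: field_simps)
      then show ?thesis unfolding Dl_def emp_def by simp
    qed
    have Dj: "Dl j - Dl (j - 1) \<le> sj j" if j: "j \<in> {1..J}" for j
    proof -
      obtain i where ji: "j = Suc i" using j by (cases j) auto
      have "l1d (v j) (v (j-1)) \<le> l1d (v j) w + l1d w (v (j-1))"
        by (rule l1d_tri) (use vl fw in auto)
      also have "\<dots> \<le> 1 / (24 * 2^j) + 1 / (24 * 2^(j-1))"
        using vd[of j] vd[of "j-1"] l1d_sym[of "v j" w] by simp
      also have "\<dots> = \<rho> j" unfolding \<rho>_def ji by (simp add: field_simps)
      finally have ij: "(f, v j, v (j-1)) \<in> Ij j" using fF vN unfolding Ij_def by auto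
      then have "S \<notin> Ej j (f, v j, v (j-1))" using notUJ j by (auto simp: UJ_def)
      then have lt: "(\<Sum>i<n. hf f (v j) (S i) - hf f (v (j-1)) (S i)) > real n * integral\<^sup>L D (\<lambda>z. hf f (v j) z - hf f (v (j-1)) z) - real n * sj j"
        using S(1) by (auto simp: Ej_def)
      have ie: "integral\<^sup>L D (\<lambda>z. hf f (v j) z - hf f (v (j-1)) z) = integral\<^sup>L D (hf f (v j)) - integral\<^sup>L D (hf f (v (j-1)))"
        by (rule Bochner_Integration.integral_diff[OF Hm_int[OF hvH] Hm_int[OF hvH]])
      have se: "(\<Sum>i<n. hf f (v j) (S i) - hf f (v (j-1)) (S i)) = (\<Sum>i<n. hf f (v j) (S i)) - (\<Sum>i<n. hf f (v (j-1)) (S i))"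
        by (rule sum_subtractf)
      have "(integral\<^sup>L D (hf f (v j)) - integral\<^sup>L D (hf f (v (j-1)))) - sj j
          < ((\<Sum>i<n. hf f (v j) (S i)) - (\<Sum>i<n. hf f (v (j-1)) (S i))) / real n"
        using lt npos unfolding ie se by (simp add: field_simps)
      then show ?thesis unfolding Dl_def emp_def by (simp add: diff_divide_distrib)
    qed
    have DJ: "Dl J \<le> s0 + (\<Sum>j\<in>{1..J}. sj j)"
    proof -
      have "Dl J = Dl 0 + (\<Sum>j\<in>{1..J}. Dl j - Dl (j - 1))" using telescope[of Dl J] by simp
      also have "\<dots> \<le> s0 + (\<Sum>j\<in>{1..J}. sj j)" using D0 Dj by (intro add_mono sum_mono) auto
      finally show ?thesis .
    qed
    have E1: "integral\<^sup>L D (hhat S) - integral\<^sup>L D (hf f (v J)) \<le> 1 / (24 * 2^J)"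
    proof (rule int_diff_le[OF D_prob Hm_int[OF hhatH] Hm_int[OF hvH]])
      show "AE z in D. hhat S z - hf f (v J) z \<le> 1 / (24 * 2^J)"
        using D_Y
      proof eventually_elim
        case (elim z)
        have "\<bar>hf f w z - hf f (v J) z\<bar> \<le> l1d w (v J)" by (rule lipY[OF fF fw(2,3) vl elim])
        then show ?case using vd[of J] fw(4) by simp
      qed
    qed
    have E2: "emp (hf f (v J)) - emp (hhat S) \<le> 1 / (24 * 2^J)"
    proof -
      have "hf f (v J) (S i) - hhat S (S i) \<le> 1 / (24 * 2^J)" if "i \<in> {..<n}" for i
      proof -
        have "\<bar>hf f (v J) (S i) - hf f w (S i)\<bar> \<le> l1d (v J) w" by (rule lipY[OF fF vl fw(2,3) SY]) (use that in auto)
        then show ?thesis using vd[of J] fw(4) l1d_sym[of w "v J"] by simp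
      qed
      then have "(\<Sum>i<n. hf f (v J) (S i) - hhat S (S i)) \<le> (\<Sum>i<n. 1 / (24 * 2^J))" by (intro sum_mono) auto
      then have "(\<Sum>i<n. hf f (v J) (S i)) - (\<Sum>i<n. hhat S (S i)) \<le> real n * (1 / (24 * 2^J))" by (simp add: sum_subtractf)
      then have "((\<Sum>i<n. hf f (v J) (S i)) - (\<Sum>i<n. hhat S (S i))) / real n \<le> 1 / (24 * 2^J)"
        using npos by (simp add: divide_le_eq mult.commute)
      then show ?thesis unfolding emp_def by (simp add: diff_divide_distrib)
    qed
    have E3: "emp (hhat S) \<le> emp hbar"
      using hhat_min[OF S(1)] hbarH unfolding emp_def emp_risk_def by auto
    have E4: "emp hbar - integral\<^sup>L D hbar \<le> sh"
    proof -
      have "\<not> (\<Sum>i<n. hbar (S i)) \<ge> real n * integral\<^sup>L D hbar + real n * sh" using notEh S(1) by (auto simp: Eh_def)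
      then have "(\<Sum>i<n. hbar (S i)) / real n < integral\<^sup>L D hbar + sh" using npos by (simp add: field_simps)
      then show ?thesis unfolding emp_def by simp
    qed
    have "integral\<^sup>L D (hhat S) - integral\<^sup>L D hbar \<le> (s0 + (\<Sum>j\<in>{1..J}. sj j)) + sh + 2 * (1 / (24 * 2^J))"
      using DJ E1 E2 E3 E4 unfolding Dl_def by linarith
    also have "\<dots> \<le> 999/1000 * \<epsilon> + \<epsilon> / 1000"
      using arith[of J] rJ unfolding s0_def sj_def sh_def \<rho>_def by linarith
    finally show ?thesis by simp
  qed
  show ?thesis using A_sets pA good by blast
qed


end
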